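(* Let $\mathcal F$ be a saturated fusion system on a finite $p$-group $S$, and let $\mathcal G$ be a saturated subsystem of $\mathcal F$ on a subgroup $T\le S$. Suppose there exists an $\mathcal F$-centric subgroup $Q\le T$ with $\operatorname{Hom}_\mathcal F(Q,T)=\operatorname{Hom}_\mathcal G(Q,T)$. Then $\operatorname{Aut}_\mathcal F(T)=\operatorname{Aut}_\mathcal G(T)$ and $T=S$.
   Context: Fusion systems: Let $S$ be a finite $p$-group. A fusion system $\mathcal F$ on $S$ is a category whose objects are the subgroups of $S$ and whose morphism sets $\operatorname{Hom}_\mathcal F(P,R)$ are sets of injective group homomorphisms $P\to R$, such that (i) every conjugation map $x\mapsto gxg^{-1}$, $g\in S$, from $P$ to $R$ lies in $\operatorname{Hom}_\mathcal F(P,R)$, and (ii) every $\varphi\in\operatorname{Hom}_\mathcal F(P,R)$ factors as an isomorphism $P\to\varphi(P)$ in $\mathcal F$ with inverse in $\mathcal F$ followed by inclusion. A subsystem $\mathcal G$ on $T\le S$ is a fusion system on $T$ with $\operatorname{Hom}_\mathcal G(P,R)\subseteq\operatorname{Hom}_\mathcal F(P,R)$. $Q$ is fully $\mathcal F$-normalized (resp. centralized) if $|N_S(Q)|$ (resp. $|C_S(Q)|$) is maximal among $\mathcal F$-conjugates of $Q$; $Q$ is $\mathcal F$-centric if $C_S(Q')=Z(Q')$ for every $\mathcal F$-conjugate $Q'$. For $\varphi\in\operatorname{Hom}_\mathcal F(Q,S)$, $N_\varphi=\{g\in N_S(Q):\varphi c_g|_Q\varphi^{-1}\in\operatorname{Aut}_S(\varphi(Q))\}$,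 $\operatorname{Aut}_S(\cdot)$ denoting automorphisms induced by conjugation by elements of $S$. $\mathcal F$ is saturated if every fully normalized $Q$ is fully centralized with $\operatorname{Aut}_S(Q)$ a Sylow $p$-subgroup of $\operatorname{Aut}_\mathcal F(Q)$, and every $\varphi\in\operatorname{Hom}_\mathcal F(Q,S)$ with $\varphi(Q)$ fully centralized extends to a morphism of $\mathcal F$ defined on $N_\varphi$. *)

theory Defs
  imports "HOL-Algebra.Group" "HOL-Computational_Algebra.Primes"
begin

text \<open>A fusion system on S is given by a function Hom assigning to subgroups P, R of S
  a set of maps P to R; maps are represented extensionally (undefined outside P).
  A subsystem on T is a fusion system on the group S with carrier restricted to T.\<close>

definition fs_conj :: "('a, 'b) monoid_scheme \<Rightarrow> 'a \<Rightarrow> 'a \<Rightarrow> 'a" where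
  "fs_conj S g = (\<lambda>x. g \<otimes>\<^bsub>S\<^esub> x \<otimes>\<^bsub>S\<^esub> inv\<^bsub>S\<^esub> g)"

definition fs_N :: "('a, 'b) monoid_scheme \<Rightarrow> 'a set \<Rightarrow> 'a set" where
  "fs_N S Q = {g \<in> carrier S. fs_conj S g ` Q = Q}"

definition fs_C :: "('a, 'b) monoid_scheme \<Rightarrow> 'a set \<Rightarrow> 'a set" where
  "fs_C S Q = {g \<in> carrier S. \<forall>x\<in>Q. g \<otimes>\<^bsub>S\<^esub> x = x \<otimes>\<^bsub>S\<^esub> g}"

definition fs_Z :: "('a, 'b) monoid_scheme \<Rightarrow> 'a set \<Rightarrow> 'a set" where
  "fs_Z S Q = Q \<inter> fs_C S Q"

definition inj_hom :: "('a, 'b) monoid_scheme \<Rightarrow> 'a set \<Rightarrow> 'a set \<Rightarrow> ('a \<Rightarrow> 'a) set" where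
  "inj_hom S P R = {\<phi>. \<phi> \<in> extensional P \<and> \<phi> ` P \<subseteq> R \<and> inj_on \<phi> P \<and>
      (\<forall>x\<in>P. \<forall>y\<in>P. \<phi> (x \<otimes>\<^bsub>S\<^esub> y) = \<phi> x \<otimes>\<^bsub>S\<^esub> \<phi> y)}"

definition AutS :: "('a, 'b) monoid_scheme \<Rightarrow> 'a set \<Rightarrow> ('a \<Rightarrow> 'a) set" where
  "AutS S Q = {restrict (fs_conj S g) Q | g. g \<in> fs_N S Q}"

definition p_group :: "nat \<Rightarrow> ('a, 'b) monoid_scheme \<Rightarrow> bool" where
  "p_group p S \<longleftrightarrow> prime p \<and> group S \<and> finite (carrier S) \<and> (\<exists>n. card (carrier S) = p ^ n)"

definition fusion_system ::
  "('a, 'b) monoid_scheme \<Rightarrow> ('a set \<Rightarrow> 'a set \<Rightarrow> ('a \<Rightarrow> 'a) set) \<Rightarrow> bool" where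
  "fusion_system S Hom \<longleftrightarrow>
     (\<forall>P R. subgroup P S \<longrightarrow> subgroup R S \<longrightarrow> Hom P R \<subseteq> inj_hom S P R) \<and>
     \<comment> \<open>composition\<close>
     (\<forall>P Q R \<phi> \<psi>. subgroup P S \<longrightarrow> subgroup Q S \<longrightarrow> subgroup R S \<longrightarrow>
        \<phi> \<in> Hom P Q \<longrightarrow> \<psi> \<in> Hom Q R \<longrightarrow> restrict (\<psi> \<circ> \<phi>) P \<in> Hom P R) \<and>
     \<comment> \<open>(i) conjugation maps\<close>
     (\<forall>P R g. subgroup P S \<longrightarrow> subgroup R S \<longrightarrow> g \<in> carrier S \<longrightarrow>
        fs_conj S g ` P \<subseteq> R \<longrightarrow> restrict (fs_conj S g) P \<in> Hom P R) \<and>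
     \<comment> \<open>(ii) factorisation as an isomorphism in F (with inverse in F) followed by inclusion\<close>
     (\<forall>P R \<phi>. subgroup P S \<longrightarrow> subgroup R S \<longrightarrow> \<phi> \<in> Hom P R \<longrightarrow>
        \<phi> \<in> Hom P (\<phi> ` P) \<and> restrict (inv_into P \<phi>) (\<phi> ` P) \<in> Hom (\<phi> ` P) P)"

definition fully_normalized ::
  "('a, 'b) monoid_scheme \<Rightarrow> ('a set \<Rightarrow> 'a set \<Rightarrow> ('a \<Rightarrow> 'a) set) \<Rightarrow> 'a set \<Rightarrow> bool" where
  "fully_normalized S Hom Q \<longleftrightarrow>
     (\<forall>\<phi>\<in>Hom Q (carrier S). card (fs_N S (\<phi> ` Q)) \<le> card (fs_N S Q))"

definition fully_centralized ::
  "('a, 'b) monoid_scheme \<Rightarrow> ('a set \<Rightarrow> 'a set \<Rightarrow> ('a \<Rightarrow> 'a) set) \<Rightarrow> 'a set \<Rightarrow> bool" where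
  "fully_centralized S Hom Q \<longleftrightarrow>
     (\<forall>\<phi>\<in>Hom Q (carrier S). card (fs_C S (\<phi> ` Q)) \<le> card (fs_C S Q))"

definition centric ::
  "('a, 'b) monoid_scheme \<Rightarrow> ('a set \<Rightarrow> 'a set \<Rightarrow> ('a \<Rightarrow> 'a) set) \<Rightarrow> 'a set \<Rightarrow> bool" where
  "centric S Hom Q \<longleftrightarrow>
     (\<forall>\<phi>\<in>Hom Q (carrier S). fs_C S (\<phi> ` Q) = fs_Z S (\<phi> ` Q))"

definition sylow_in :: "nat \<Rightarrow> ('a \<Rightarrow> 'a) set \<Rightarrow> ('a \<Rightarrow> 'a) set \<Rightarrow> bool" where
  "sylow_in p H A \<longleftrightarrow> H \<subseteq> A \<and> card H = p ^ multiplicity p (card A)"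

definition N_phi ::
  "('a, 'b) monoid_scheme \<Rightarrow> 'a set \<Rightarrow> ('a \<Rightarrow> 'a) \<Rightarrow> 'a set" where
  "N_phi S Q \<phi> = {g \<in> fs_N S Q.
      restrict (\<phi> \<circ> fs_conj S g \<circ> inv_into Q \<phi>) (\<phi> ` Q) \<in> AutS S (\<phi> ` Q)}"

definition saturated ::
  "nat \<Rightarrow> ('a, 'b) monoid_scheme \<Rightarrow> ('a set \<Rightarrow> 'a set \<Rightarrow> ('a \<Rightarrow> 'a) set) \<Rightarrow> bool" where
  "saturated p S Hom \<longleftrightarrow> fusion_system S Hom \<and>
     (\<forall>Q. subgroup Q S \<longrightarrow> fully_normalized S Hom Q \<longrightarrow>
        fully_centralized S Hom Q \<and> sylow_in p (AutS S Q) (Hom Q Q)) \<and>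
     (\<forall>Q \<phi>. subgroup Q S \<longrightarrow> \<phi> \<in> Hom Q (carrier S) \<longrightarrow>
        fully_centralized S Hom (\<phi> ` Q) \<longrightarrow>
        (\<exists>\<psi> \<in> Hom (N_phi S Q \<phi>) (carrier S). \<forall>x\<in>Q. \<psi> x = \<phi> x))"

definition subsystem ::
  "('a, 'b) monoid_scheme \<Rightarrow> ('a set \<Rightarrow> 'a set \<Rightarrow> ('a \<Rightarrow> 'a) set) \<Rightarrow> 'a set
     \<Rightarrow> ('a set \<Rightarrow> 'a set \<Rightarrow> ('a \<Rightarrow> 'a) set) \<Rightarrow> bool" where
  "subsystem S HomF T HomG \<longleftrightarrow> subgroup T S \<and> fusion_system (S\<lparr>carrier := T\<rparr>) HomG \<and>
     (\<forall>P R. subgroup P S \<longrightarrow> subgroup R S \<longrightarrow> P \<subseteq> T \<longrightarrow> R \<subseteq> T \<longrightarrow> HomG P R \<subseteq> HomF P R)"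

end

theory Submission
  imports Defs "HOL-Algebra.Group_Action" "HOL-Algebra.Left_Coset" "HOL-Algebra.Multiplicative_Group"
begin

lemma action_is_group_action:
  assumes C: "group C"
   and cl: "\<And>c x. c \<in> carrier C \<Longrightarrow> x \<in> X \<Longrightarrow> act c x \<in> X"
   and one: "\<And>x. x \<in> X \<Longrightarrow> act \<one>\<^bsub>C\<^esub> x = x"
   and mul: "\<And>c d x. c \<in> carrier C \<Longrightarrow> d \<in> carrier C \<Longrightarrow> x \<in> X \<Longrightarrow> act (c \<otimes>\<^bsub>C\<^esub> d) x = act c (act d x)"
  shows "group_action C X (\<lambda>c. restrict (act c) X)"
proof -
  interpret C: group C by fact
  have bij: "restrict (act c) X \<in> Bij X" if c: "c \<in> carrier C" for c
  proof -
    have inv1: "act (inv\<^bsub>C\<^esub> c) (act c x) = x" if "x \<in> X" for x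
      using mul[of "inv\<^bsub>C\<^esub> c" c x] one[of x] c that by simp
    have inv2: "act c (act (inv\<^bsub>C\<^esub> c) x) = x" if "x \<in> X" for x
      using mul[of c "inv\<^bsub>C\<^esub> c" x] one[of x] c that by simp
    have "bij_betw (act c) X X"
      unfolding bij_betw_def inj_on_def
      using cl inv1 inv2 c by (metis C.inv_closed image_iff subsetI subset_antisym image_subsetI)
    then show ?thesis unfolding Bij_def
      by (simp add: bij_betw_def inj_on_def image_def)
  qed
  show ?thesis
    unfolding group_action_def group_hom_def group_hom_axioms_def hom_def
  proof (intro conjI)
    show "group C" by fact
    show "group (BijGroup X)" by (rule group_BijGroup)
    show "(\<lambda>c. restrict (act c) X) \<in> {h \<in> carrier C \<rightarrow> carrier (BijGroup X).
      \<forall>x\<in>carrier C. \<forall>y\<in>carrier C. h (x \<otimes>\<^bsub>C\<^esub> y) = h x \<otimes>\<^bsub>BijGroup X\<^esub> h y}"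
    proof (intro CollectI conjI ballI Pi_I)
      fix c assume "c \<in> carrier C" then show "restrict (act c) X \<in> carrier (BijGroup X)"
        using bij by (simp add: BijGroup_def)
    next
      fix c d assume c: "c \<in> carrier C" and d: "d \<in> carrier C"
      show "restrict (act (c \<otimes>\<^bsub>C\<^esub> d)) X = restrict (act c) X \<otimes>\<^bsub>BijGroup X\<^esub> restrict (act d) X"
        using bij[OF c] bij[OF d] c d mul cl
        by (auto simp: BijGroup_def compose_def restrict_def fun_eq_iff)
    qed
  qed
qed

lemma fixed_point_mod:
  assumes C: "group C" and X: "finite X" and p: "prime p" and ord: "order C = p ^ k"
   and cl: "\<And>c x. c \<in> carrier C \<Longrightarrow> x \<in> X \<Longrightarrow> act c x \<in> X"
   and one: "\<And>x. x \<in> X \<Longrightarrow> act \<one>\<^bsub>C\<^esub> x = x"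
   and mul: "\<And>c d x. c \<in> carrier C \<Longrightarrow> d \<in> carrier C \<Longrightarrow> x \<in> X \<Longrightarrow> act (c \<otimes>\<^bsub>C\<^esub> d) x = act c (act d x)"
  shows "card X mod p = card {x \<in> X. \<forall>c\<in>carrier C. act c x = x} mod p"
proof -
  define \<phi> where "\<phi> = (\<lambda>c. restrict (act c) X)"
  define Fix where "Fix = {x \<in> X. \<forall>c\<in>carrier C. act c x = x}"
  interpret A: group_action C X \<phi>
    unfolding \<phi>_def by (rule action_is_group_action[OF C cl one mul])
  interpret C: group C by fact
  have orb: "orbit C \<phi> x = {act c x | c. c \<in> carrier C}" if "x \<in> X" for x
    using that by (auto simp: orbit_def \<phi>_def)
  have fix_orb: "orbit C \<phi> x = {x}" if "x \<in> Fix" for x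
  proof -
    have xX: "x \<in> X" and fx: "\<forall>c\<in>carrier C. act c x = x" using that unfolding Fix_def by auto
    have "{act c x | c. c \<in> carrier C} = {x}"
    proof
      show "{act c x | c. c \<in> carrier C} \<subseteq> {x}" using fx by blast
      show "{x} \<subseteq> {act c x | c. c \<in> carrier C}" using fx C.one_closed by (auto intro!: exI[of _ "\<one>\<^bsub>C\<^esub>"])
    qed
    then show ?thesis using orb[OF xX] by simp
  qed
  have nfix_dvd: "p dvd card (orbit C \<phi> x)" if x: "x \<in> X" "x \<notin> Fix" for x
  proof -
    have "card (orbit C \<phi> x) * card (stabilizer C \<phi> x) = p ^ k"
      using A.orbit_stabilizer_theorem[OF x(1)] ord by simp
    then have "card (orbit C \<phi> x) dvd p ^ k" by (metis dvd_triv_left)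
    then obtain i where i: "card (orbit C \<phi> x) = p ^ i"
      using p by (auto simp: divides_primepow_nat)
    have "card (orbit C \<phi> x) \<noteq> 1"
    proof
      assume c1: "card (orbit C \<phi> x) = 1"
      have "x \<in> orbit C \<phi> x" using A.orbit_refl x by simp
      with c1 have "orbit C \<phi> x = {x}" by (metis card_1_singletonE singletonD)
      then have "x \<in> Fix" using orb[OF x(1)] x(1) unfolding Fix_def by blast
      with x show False by simp
    qed
    with i have "i \<noteq> 0" by auto
    then show ?thesis using i by (simp add: dvd_power)
  qed
  define f where "f = (\<lambda>x. if x \<in> Fix then 0 else (1::nat))"
  have s1: "(\<Sum>x\<in>X. f x) = card (X - Fix)"
    unfolding f_def using X by (simp add: sum.If_cases Fix_def Diff_eq) (rule arg_cong[where f=card], blast)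
  have s2: "p dvd (\<Sum>x\<in>orb. f x)" if o: "orb \<in> orbits C X \<phi>" for orb
  proof -
    obtain x0 where x0: "x0 \<in> X" "orb = orbit C \<phi> x0" using o unfolding orbits_def by blast
    show ?thesis
    proof (cases "x0 \<in> Fix")
      case True then show ?thesis using fix_orb x0 by (simp add: f_def)
    next
      case False
      have "\<forall>y\<in>orb. y \<notin> Fix"
      proof (intro ballI notI)
        fix y assume y: "y \<in> orb" "y \<in> Fix"
        have yX: "y \<in> X" using y Fix_def by blast
        have "x0 \<in> orbit C \<phi> y" using A.orbit_sym[OF x0(1) yX] y x0 by simp
        then show False using fix_orb[OF y(2)] y False by simp
      qed
      then have "(\<Sum>x\<in>orb. f x) = card orb" by (simp add: f_def)
      then show ?thesis using nfix_dvd[OF x0(1) False] x0 by simp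
    qed
  qed
  have "(\<Sum>orb\<in>orbits C X \<phi>. \<Sum>x\<in>orb. f x) = (\<Sum>x\<in>X. f x)"
    by (rule A.disjoint_sum[OF X])
  moreover have "p dvd (\<Sum>orb\<in>orbits C X \<phi>. \<Sum>x\<in>orb. f x)"
    by (rule dvd_sum) (rule s2)
  ultimately have "p dvd card (X - Fix)" using s1 by simp
  moreover have "card X = card Fix + card (X - Fix)"
  proof -
    have FX: "Fix \<subseteq> X" unfolding Fix_def by blast
    then have "finite Fix" using X finite_subset by blast
    then show ?thesis using card_Diff_subset[OF _ FX] card_mono[OF X FX] by simp
  qed
  ultimately show ?thesis unfolding Fix_def[symmetric] by (auto elim!: dvdE)
qed


lemma sylow_conj_elem:
  assumes A: "group A" and fin: "finite (carrier A)" and p: "prime p"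
    and H: "subgroup H A" and cH: "card H = p ^ multiplicity p (order A)"
    and a: "a \<in> carrier A" and an: "a [^]\<^bsub>A\<^esub> ((p::nat) ^ n) = \<one>\<^bsub>A\<^esub>"
  shows "\<exists>d\<in>carrier A. inv\<^bsub>A\<^esub> d \<otimes>\<^bsub>A\<^esub> a \<otimes>\<^bsub>A\<^esub> d \<in> H"
proof -
  interpret A: group A by fact
  define G where "G = generate A {a}"
  have sG: "subgroup G A" unfolding G_def using a by (simp add: A.generate_is_subgroup)
  define C where "C = A\<lparr>carrier := G\<rparr>"
  have C: "group C" unfolding C_def using sG by (simp add: A.subgroup_imp_group)
  have "A.ord a dvd p ^ n" using A.pow_eq_id[OF a] an by simp
  then obtain j where "A.ord a = p ^ j" using p by (auto simp: divides_primepow_nat)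
  then have oC: "order C = p ^ j" unfolding C_def order_def G_def using A.generate_pow_card[OF a] by simp
  define X where "X = lcosets\<^bsub>A\<^esub> H"
  have HA: "H \<subseteq> carrier A" using H subgroup.subset by blast
  have Xsub: "Y \<subseteq> carrier A" if "Y \<in> X" for Y
    using that HA unfolding X_def LCOSETS_def by (auto simp: l_coset_def)
  have finX: "finite X" unfolding X_def LCOSETS_def using fin by simp
  have GA: "G \<subseteq> carrier A" using sG subgroup.subset by blast
  have fp: "card X mod p = card {Y \<in> X. \<forall>c\<in>carrier C. c <#\<^bsub>A\<^esub> Y = Y} mod p"
  proof (rule fixed_point_mod[OF C finX p oC])
    fix c Y assume c: "c \<in> carrier C" and Y: "Y \<in> X"
    then obtain d where d: "d \<in> carrier A" "Y = d <#\<^bsub>A\<^esub> H" unfolding X_def LCOSETS_def by blast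
    have "c <#\<^bsub>A\<^esub> Y = (c \<otimes>\<^bsub>A\<^esub> d) <#\<^bsub>A\<^esub> H"
      using d c GA HA by (simp add: C_def A.lcos_m_assoc subsetD)
    then show "c <#\<^bsub>A\<^esub> Y \<in> X" unfolding X_def LCOSETS_def using c d GA C_def by auto
  next
    fix Y assume "Y \<in> X" then show "\<one>\<^bsub>C\<^esub> <#\<^bsub>A\<^esub> Y = Y"
      using Xsub by (simp add: C_def A.lcos_mult_one)
  next
    fix c d Y assume "c \<in> carrier C" "d \<in> carrier C" "Y \<in> X"
    then show "(c \<otimes>\<^bsub>C\<^esub> d) <#\<^bsub>A\<^esub> Y = c <#\<^bsub>A\<^esub> (d <#\<^bsub>A\<^esub> Y)"
      using Xsub GA by (simp add: C_def A.lcos_m_assoc subsetD)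
  qed
  have lag: "card X * card H = order A" unfolding X_def using A.l_lagrange[OF fin H] .
  have ndvd: "\<not> p dvd card X"
  proof
    assume "p dvd card X"
    then have "p ^ Suc (multiplicity p (order A)) dvd order A"
      using lag cH by (metis mult_dvd_mono dvd_refl power_Suc)
    moreover have "order A \<noteq> 0" using fin A.order_gt_0_iff_finite by simp
    ultimately show False using p
      by (metis Suc_n_not_le_n multiplicity_geI not_prime_unit)
  qed
  have "card {Y \<in> X. \<forall>c\<in>carrier C. c <#\<^bsub>A\<^esub> Y = Y} \<noteq> 0"
    using fp ndvd by (metis mod_0 dvd_eq_mod_eq_0)
  then obtain Y where Y: "Y \<in> X" "\<forall>c\<in>carrier C. c <#\<^bsub>A\<^esub> Y = Y"
  proof -
    have "{Y \<in> X. \<forall>c\<in>carrier C. c <#\<^bsub>A\<^esub> Y = Y} \<noteq> {}" using \<open>card _ \<noteq> 0\<close> by (metis card.empty)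
    then show ?thesis using that by blast
  qed
  then obtain d where d: "d \<in> carrier A" "Y = d <#\<^bsub>A\<^esub> H" unfolding X_def LCOSETS_def by blast
  have aC: "a \<in> carrier C" unfolding C_def G_def by (simp add: generate.incl)
  have "(a \<otimes>\<^bsub>A\<^esub> d) <#\<^bsub>A\<^esub> H = d <#\<^bsub>A\<^esub> H"
    using Y(2) aC d a HA A.lcos_m_assoc[of H a d] by simp
  moreover have "a \<otimes>\<^bsub>A\<^esub> d \<in> (a \<otimes>\<^bsub>A\<^esub> d) <#\<^bsub>A\<^esub> H"
    using A.lcos_self a d H by simp
  ultimately have "a \<otimes>\<^bsub>A\<^esub> d \<in> d <#\<^bsub>A\<^esub> H" by simp
  then obtain h where h: "h \<in> H" "a \<otimes>\<^bsub>A\<^esub> d = d \<otimes>\<^bsub>A\<^esub> h" unfolding l_coset_def by blast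
  have "inv\<^bsub>A\<^esub> d \<otimes>\<^bsub>A\<^esub> a \<otimes>\<^bsub>A\<^esub> d = h"
    using h d a HA by (metis A.inv_solve_left' A.m_assoc A.m_closed subsetD A.inv_closed)
  then show ?thesis using d h by blast
qed

lemma lcoset_self_in:
  assumes G: "group G" and H: "subgroup H G" and c: "c \<in> H"
  shows "c <#\<^bsub>G\<^esub> H = H"
proof -
  interpret G: group G by fact
  have Hc: "H \<subseteq> carrier G" using H subgroup.subset by blast
  show ?thesis
  proof
    show "c <#\<^bsub>G\<^esub> H \<subseteq> H" using H c by (auto simp: l_coset_def subgroup.m_closed)
    show "H \<subseteq> c <#\<^bsub>G\<^esub> H"
    proof
      fix h assume h: "h \<in> H"
      have "inv\<^bsub>G\<^esub> c \<otimes>\<^bsub>G\<^esub> h \<in> H" using H c h by (simp add: subgroup.m_closed subgroup.m_inv_closed)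
      moreover have "h = c \<otimes>\<^bsub>G\<^esub> (inv\<^bsub>G\<^esub> c \<otimes>\<^bsub>G\<^esub> h)" using h c Hc
        by (metis G.inv_solve_left' G.m_closed subsetD G.inv_closed)
      ultimately show "h \<in> c <#\<^bsub>G\<^esub> H" unfolding l_coset_def by blast
    qed
  qed
qed

lemma normalizer_grows:
  assumes S: "group S" and fin: "finite (carrier S)" and p: "prime p" and oS: "order S = p ^ n"
    and H: "subgroup H S" and P: "subgroup P S" and HP: "H \<subset> P"
  shows "\<exists>g\<in>P - H. fs_conj S g ` H = H"
proof -
  interpret S: group S by fact
  define P' where "P' = S\<lparr>carrier := P\<rparr>"
  have P'g: "group P'" unfolding P'_def using P S by (simp add: subgroup.subgroup_is_group)
  have HP': "subgroup H P'" unfolding P'_def using S.subgroup_incl[OF H P] HP by auto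
  have finP: "finite P" using fin P subgroup.subset finite_subset by blast
  have finH: "finite H" using finP HP finite_subset by blast
  have "card P dvd p ^ n"
    using S.lagrange[OF P] oS by (metis dvd_triv_right)
  then obtain m where m: "card P = p ^ m" using p by (auto simp: divides_primepow_nat)
  have "card H dvd p ^ n"
    using S.lagrange[OF H] oS by (metis dvd_triv_right)
  then obtain i where i: "card H = p ^ i" using p by (auto simp: divides_primepow_nat)
  have "card H < card P" using HP finP by (simp add: psubset_card_mono)
  then have im: "i < m" using m i p by (metis nat_power_less_imp_less prime_gt_0_nat)
  define C where "C = S\<lparr>carrier := H\<rparr>"
  have C: "group C" unfolding C_def using H S by (simp add: subgroup.subgroup_is_group)
  have oC: "order C = p ^ i" unfolding C_def order_def using i by simp
  define X where "X = lcosets\<^bsub>P'\<^esub> H"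
  have finX: "finite X" unfolding X_def LCOSETS_def P'_def using finP by simp
  have Xform: "Y \<in> X \<longleftrightarrow> (\<exists>g\<in>P. Y = g <#\<^bsub>S\<^esub> H)" for Y
    unfolding X_def LCOSETS_def P'_def by (auto simp: l_coset_def)
  have HS: "H \<subseteq> carrier S" using H subgroup.subset by blast
  have PS: "P \<subseteq> carrier S" using P subgroup.subset by blast
  have fp: "card X mod p = card {Y \<in> X. \<forall>c\<in>carrier C. c <#\<^bsub>S\<^esub> Y = Y} mod p"
  proof (rule fixed_point_mod[OF C finX p oC])
    fix c Y assume c: "c \<in> carrier C" and Y: "Y \<in> X"
    then obtain d where d: "d \<in> P" "Y = d <#\<^bsub>S\<^esub> H" using Xform by blast
    have "c <#\<^bsub>S\<^esub> Y = (c \<otimes>\<^bsub>S\<^esub> d) <#\<^bsub>S\<^esub> H"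
      using d c HS PS HP unfolding C_def by (simp add: S.lcos_m_assoc subsetD)
    moreover have "c \<otimes>\<^bsub>S\<^esub> d \<in> P" using c d HP P unfolding C_def by (auto simp: subgroup.m_closed)
    ultimately show "c <#\<^bsub>S\<^esub> Y \<in> X" using Xform by blast
  next
    fix Y assume "Y \<in> X" then show "\<one>\<^bsub>C\<^esub> <#\<^bsub>S\<^esub> Y = Y"
      using Xform HS PS by (auto simp: C_def S.lcos_m_assoc subsetD S.lcos_mult_one)
  next
    fix c d Y assume cd: "c \<in> carrier C" "d \<in> carrier C" and "Y \<in> X"
    then obtain g where g: "g \<in> P" "Y = g <#\<^bsub>S\<^esub> H" using Xform by blast
    have "c \<in> carrier S" "d \<in> carrier S" "g \<in> carrier S" using cd g HS PS unfolding C_def by auto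
    then show "(c \<otimes>\<^bsub>C\<^esub> d) <#\<^bsub>S\<^esub> Y = c <#\<^bsub>S\<^esub> (d <#\<^bsub>S\<^esub> Y)"
      using g HS unfolding C_def by (simp add: S.lcos_m_assoc S.m_assoc)
  qed
  have lag: "card X * card H = card P"
    using group.l_lagrange[OF P'g _ HP'] finP unfolding X_def P'_def order_def by simp
  moreover have "p ^ m = p ^ (m - i) * p ^ i" using im by (simp add: power_add[symmetric])
  moreover have "p ^ i \<noteq> 0" using p by (simp add: prime_gt_0_nat)
  ultimately have "card X = p ^ (m - i)" using m i p prime_gt_0_nat by auto
  then have "p dvd card X" using im by (simp add: dvd_power)
  then have dvdF: "p dvd card {Y \<in> X. \<forall>c\<in>carrier C. c <#\<^bsub>S\<^esub> Y = Y}"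
    using fp by (simp add: dvd_eq_mod_eq_0)
  define F where "F = {Y \<in> X. \<forall>c\<in>carrier C. c <#\<^bsub>S\<^esub> Y = Y}"
  have HF: "H \<in> F"
  proof -
    have "H = \<one>\<^bsub>S\<^esub> <#\<^bsub>S\<^esub> H" using HS by (simp add: S.lcos_mult_one)
    moreover have "\<one>\<^bsub>S\<^esub> \<in> P" using P subgroup.one_closed by blast
    ultimately have "H \<in> X" using Xform by blast
    moreover have "\<forall>c\<in>carrier C. c <#\<^bsub>S\<^esub> H = H" unfolding C_def using lcoset_self_in[OF S H] by simp
    ultimately show ?thesis unfolding F_def by blast
  qed
  have finF: "finite F" unfolding F_def using finX by simp
  have "card F \<noteq> 0" using HF finF by auto
  then have "card F \<ge> 2" using dvdF p unfolding F_def[symmetric]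
  proof -
    have "p \<le> card F" using dvdF \<open>card F \<noteq> 0\<close> unfolding F_def[symmetric] by (simp add: dvd_imp_le)
    then show ?thesis using prime_ge_2_nat[OF p] by simp
  qed
  then obtain Y where Y: "Y \<in> F" "Y \<noteq> H"
  proof -
    assume r: "\<And>Y. Y \<in> F \<Longrightarrow> Y \<noteq> H \<Longrightarrow> thesis"
    show thesis
    proof (rule ccontr)
      assume "\<not> thesis"
      then have "F \<subseteq> {H}" using r by blast
      then have "card F \<le> card {H}" by (intro card_mono) auto
      then have "card F \<le> 1" by simp
      with \<open>card F \<ge> 2\<close> show False by simp
    qed
  qed
  have YX: "Y \<in> X" using Y(1) unfolding F_def by simp
  obtain g where g: "g \<in> P" "Y = g <#\<^bsub>S\<^esub> H" using iffD1[OF Xform[of Y] YX] by blast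
  have gS: "g \<in> carrier S" using g PS by blast
  have gH: "g \<notin> H"
  proof
    assume "g \<in> H" then have "Y = H" using g lcoset_self_in[OF S H] by simp
    with Y show False by simp
  qed
  have conj_in: "inv\<^bsub>S\<^esub> g \<otimes>\<^bsub>S\<^esub> h \<otimes>\<^bsub>S\<^esub> g \<in> H" if h: "h \<in> H" for h
  proof -
    have hS: "h \<in> carrier S" using h HS by blast
    have "h <#\<^bsub>S\<^esub> Y = Y" using Y(1) h unfolding F_def C_def by simp
    then have "(h \<otimes>\<^bsub>S\<^esub> g) <#\<^bsub>S\<^esub> H = g <#\<^bsub>S\<^esub> H"
      using g gS hS HS S.lcos_m_assoc[of H h g] by simp
    moreover have "h \<otimes>\<^bsub>S\<^esub> g \<in> (h \<otimes>\<^bsub>S\<^esub> g) <#\<^bsub>S\<^esub> H"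
      using S.lcos_self hS gS H by simp
    ultimately have "h \<otimes>\<^bsub>S\<^esub> g \<in> g <#\<^bsub>S\<^esub> H" by simp
    then obtain h' where h': "h' \<in> H" "h \<otimes>\<^bsub>S\<^esub> g = g \<otimes>\<^bsub>S\<^esub> h'" unfolding l_coset_def by blast
    have "inv\<^bsub>S\<^esub> g \<otimes>\<^bsub>S\<^esub> h \<otimes>\<^bsub>S\<^esub> g = h'"
      using h' gS hS HS by (metis S.inv_solve_left' S.m_assoc S.m_closed subsetD S.inv_closed)
    then show ?thesis using h' by simp
  qed
  define x where "x = inv\<^bsub>S\<^esub> g"
  have xS: "x \<in> carrier S" unfolding x_def using gS by simp
  have sub: "fs_conj S x ` H \<subseteq> H"
    using conj_in gS unfolding fs_conj_def x_def by auto
  have "inj_on (fs_conj S x) H"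
  proof (rule inj_onI)
    fix u v assume u: "u \<in> H" and v: "v \<in> H" and e: "fs_conj S x u = fs_conj S x v"
    have uS: "u \<in> carrier S" and vS: "v \<in> carrier S" using u v HS by auto
    from e have "x \<otimes>\<^bsub>S\<^esub> u \<otimes>\<^bsub>S\<^esub> inv\<^bsub>S\<^esub> x = x \<otimes>\<^bsub>S\<^esub> v \<otimes>\<^bsub>S\<^esub> inv\<^bsub>S\<^esub> x" unfolding fs_conj_def .
    then have "x \<otimes>\<^bsub>S\<^esub> u = x \<otimes>\<^bsub>S\<^esub> v" using xS uS vS by (simp add: S.m_closed S.right_cancel S.inv_closed)
    then show "u = v" using xS uS vS by simp
  qed
  then have "card (fs_conj S x ` H) = card H" by (simp add: card_image)
  then have eq: "fs_conj S x ` H = H" using sub finH by (simp add: card_subset_eq)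
  have "x \<in> P" unfolding x_def using g P by (simp add: subgroup.m_inv_closed)
  moreover have "x \<notin> H" unfolding x_def using gH H gS by (metis S.inv_inv subgroup.m_inv_closed)
  ultimately show ?thesis using eq by blast
qed


lemma fs_conj_apply: "fs_conj S g x = g \<otimes>\<^bsub>S\<^esub> x \<otimes>\<^bsub>S\<^esub> inv\<^bsub>S\<^esub> g"
  by (simp add: fs_conj_def)

context group
begin

lemma conj_closed: "g \<in> carrier G \<Longrightarrow> x \<in> carrier G \<Longrightarrow> fs_conj G g x \<in> carrier G"
  by (simp add: fs_conj_def)

lemma inv_cancel_mid: "a \<in> carrier G \<Longrightarrow> g \<in> carrier G \<Longrightarrow> b \<in> carrier G \<Longrightarrow> a \<otimes> inv g \<otimes> (g \<otimes> b) = a \<otimes> b"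
proof -
  assume a: "a \<in> carrier G" and g: "g \<in> carrier G" and b: "b \<in> carrier G"
  have "a \<otimes> inv g \<otimes> (g \<otimes> b) = a \<otimes> ((inv g \<otimes> g) \<otimes> b)" using a g b by (simp only: m_assoc inv_closed m_closed)
  then show ?thesis using a g b by simp
qed

lemma conj_mult: "g \<in> carrier G \<Longrightarrow> x \<in> carrier G \<Longrightarrow> y \<in> carrier G \<Longrightarrow>
   fs_conj G g (x \<otimes> y) = fs_conj G g x \<otimes> fs_conj G g y"
proof -
  assume g: "g \<in> carrier G" and x: "x \<in> carrier G" and y: "y \<in> carrier G"
  have "g \<otimes> x \<otimes> inv g \<otimes> (g \<otimes> (y \<otimes> inv g)) = g \<otimes> x \<otimes> (y \<otimes> inv g)"
    using inv_cancel_mid[of "g \<otimes> x" g "y \<otimes> inv g"] g x y by simp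
  then show ?thesis unfolding fs_conj_def using g x y by (simp add: m_assoc)
qed

lemma conj_conj: "g \<in> carrier G \<Longrightarrow> h \<in> carrier G \<Longrightarrow> x \<in> carrier G \<Longrightarrow>
   fs_conj G g (fs_conj G h x) = fs_conj G (g \<otimes> h) x"
  by (simp add: fs_conj_def m_assoc inv_mult_group)

lemma conj_one: "x \<in> carrier G \<Longrightarrow> fs_conj G \<one> x = x"
  by (simp add: fs_conj_def)

lemma conj_inv_cancel: "g \<in> carrier G \<Longrightarrow> x \<in> carrier G \<Longrightarrow> fs_conj G (inv g) (fs_conj G g x) = x"
  by (simp add: conj_conj conj_one)

lemma conj_inj: "g \<in> carrier G \<Longrightarrow> inj_on (fs_conj G g) (carrier G)"
  by (metis conj_inv_cancel inj_onI)

lemma conj_eq_iff_C: "g \<in> carrier G \<Longrightarrow> x \<in> carrier G \<Longrightarrow> fs_conj G g x = x \<longleftrightarrow> g \<otimes> x = x \<otimes> g"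
  unfolding fs_conj_def by (metis inv_closed m_closed inv_solve_right' )

end

locale fsys =
  fixes S (structure) and Hom :: "'a set \<Rightarrow> 'a set \<Rightarrow> ('a \<Rightarrow> 'a) set"
  assumes grp: "group S" and fin: "finite (carrier S)" and fs: "fusion_system S Hom"
begin

sublocale group S by (rule grp)

lemma fs_ax:
  "\<And>P R. subgroup P S \<Longrightarrow> subgroup R S \<Longrightarrow> Hom P R \<subseteq> inj_hom S P R"
  "\<And>P Q R \<phi> \<psi>. subgroup P S \<Longrightarrow> subgroup Q S \<Longrightarrow> subgroup R S \<Longrightarrow>
        \<phi> \<in> Hom P Q \<Longrightarrow> \<psi> \<in> Hom Q R \<Longrightarrow> restrict (\<psi> \<circ> \<phi>) P \<in> Hom P R"
  "\<And>P R g. subgroup P S \<Longrightarrow> subgroup R S \<Longrightarrow> g \<in> carrier S \<Longrightarrow>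
        fs_conj S g ` P \<subseteq> R \<Longrightarrow> restrict (fs_conj S g) P \<in> Hom P R"
  "\<And>P R \<phi>. subgroup P S \<Longrightarrow> subgroup R S \<Longrightarrow> \<phi> \<in> Hom P R \<Longrightarrow>
        \<phi> \<in> Hom P (\<phi> ` P) \<and> restrict (inv_into P \<phi>) (\<phi> ` P) \<in> Hom (\<phi> ` P) P"
  using fs unfolding fusion_system_def by (simp_all only: HOL.simp_thms)

lemma hom_props:
  assumes "subgroup P S" "subgroup R S" "\<phi> \<in> Hom P R"
  shows "\<phi> \<in> extensional P" "\<phi> ` P \<subseteq> R" "inj_on \<phi> P" "\<And>x y. x \<in> P \<Longrightarrow> y \<in> P \<Longrightarrow> \<phi> (x \<otimes> y) = \<phi> x \<otimes> \<phi> y"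
proof -
  have "\<phi> \<in> inj_hom S P R" using fs_ax(1)[OF assms(1,2)] assms(3) by blast
  then show "\<phi> \<in> extensional P" "\<phi> ` P \<subseteq> R" "inj_on \<phi> P" "\<And>x y. x \<in> P \<Longrightarrow> y \<in> P \<Longrightarrow> \<phi> (x \<otimes> y) = \<phi> x \<otimes> \<phi> y"
    unfolding inj_hom_def by auto
qed

lemma hom_comp:
  assumes "subgroup P S" "subgroup Q S" "subgroup R S" "\<phi> \<in> Hom P Q" "\<psi> \<in> Hom Q R"
  shows "restrict (\<psi> \<circ> \<phi>) P \<in> Hom P R"
  using fs_ax(2)[OF assms] .

lemma hom_conj:
  assumes "subgroup P S" "subgroup R S" "g \<in> carrier S" "fs_conj S g ` P \<subseteq> R"
  shows "restrict (fs_conj S g) P \<in> Hom P R"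
  using fs_ax(3)[OF assms] .

lemma hom_factor:
  assumes "subgroup P S" "subgroup R S" "\<phi> \<in> Hom P R"
  shows "\<phi> \<in> Hom P (\<phi> ` P)" "restrict (inv_into P \<phi>) (\<phi> ` P) \<in> Hom (\<phi> ` P) P"
  using fs_ax(4)[OF assms] by auto

lemma hom_id:
  assumes "subgroup P S" "subgroup R S" "P \<subseteq> R"
  shows "restrict (\<lambda>x. x) P \<in> Hom P R"
proof -
  have PS: "P \<subseteq> carrier S" using assms(1) subgroup.subset by blast
  have eq: "restrict (fs_conj S \<one>) P = restrict (\<lambda>x. x) P"
  proof
    fix x show "restrict (fs_conj S \<one>) P x = restrict (\<lambda>x. x) P x"
      using PS conj_one[of x] by (cases "x \<in> P") auto
  qed
  have "fs_conj S \<one> ` P \<subseteq> R"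
  proof
    fix y assume "y \<in> fs_conj S \<one> ` P"
    then obtain x where x: "x \<in> P" "y = fs_conj S \<one> x" by blast
    then have "x \<in> carrier S" using PS by blast
    then have "y = x" using x conj_one[of x] by simp
    then show "y \<in> R" using x assms(3) by blast
  qed
  then have "restrict (fs_conj S \<one>) P \<in> Hom P R"
    using hom_conj[OF assms(1,2)] by simp
  then show ?thesis using eq by simp
qed

lemma hom_one:
  assumes "subgroup P S" "\<phi> ` P \<subseteq> carrier S" "\<And>x y. x \<in> P \<Longrightarrow> y \<in> P \<Longrightarrow> \<phi> (x \<otimes> y) = \<phi> x \<otimes> \<phi> y"
  shows "\<phi> \<one> = \<one>" "\<And>x. x \<in> P \<Longrightarrow> \<phi> (inv x) = inv (\<phi> x)"
proof -
  have o: "\<one> \<in> P" by (rule subgroup.one_closed[OF assms(1)])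
  have oc: "\<phi> \<one> \<in> carrier S" by (rule subsetD[OF assms(2) imageI[OF o]])
  have e: "\<phi> (\<one> \<otimes> \<one>) = \<phi> \<one> \<otimes> \<phi> \<one>" by (rule assms(3)[OF o o])
  have "\<phi> \<one> = \<phi> \<one> \<otimes> \<phi> \<one>" using e unfolding l_one[OF one_closed] .
  then show one: "\<phi> \<one> = \<one>" by (rule iffD1[OF l_cancel_one'[OF oc oc]])
  fix x assume x: "x \<in> P"
  have ix: "inv x \<in> P" by (rule subgroup.m_inv_closed[OF assms(1) x])
  have xc: "x \<in> carrier S" by (rule subgroup.mem_carrier[OF assms(1) x])
  have e2: "\<phi> (inv x \<otimes> x) = \<phi> (inv x) \<otimes> \<phi> x" by (rule assms(3)[OF ix x])
  have "\<phi> \<one> = \<phi> (inv x) \<otimes> \<phi> x" using e2 unfolding l_inv[OF xc] .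
  then have "\<phi> (inv x) \<otimes> \<phi> x = \<one>" unfolding one by (rule sym)
  moreover have "\<phi> x \<in> carrier S" by (rule subsetD[OF assms(2) imageI[OF x]])
  moreover have "\<phi> (inv x) \<in> carrier S" by (rule subsetD[OF assms(2) imageI[OF ix]])
  ultimately have "inv (\<phi> x) = \<phi> (inv x)" by (rule inv_equality)
  then show "\<phi> (inv x) = inv (\<phi> x)" by (rule sym)
qed

lemma hom_image_subgroup:
  assumes "subgroup P S" "\<phi> ` P \<subseteq> carrier S" "\<And>x y. x \<in> P \<Longrightarrow> y \<in> P \<Longrightarrow> \<phi> (x \<otimes> y) = \<phi> x \<otimes> \<phi> y"
  shows "subgroup (\<phi> ` P) S"
proof (rule subgroupI)
  show "\<phi> ` P \<subseteq> carrier S" by fact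
  show "\<phi> ` P \<noteq> {}" using assms(1) subgroup.one_closed by blast
  fix a assume "a \<in> \<phi> ` P"
  then obtain x where x: "x \<in> P" "a = \<phi> x" by blast
  then show "inv a \<in> \<phi> ` P" using hom_one[OF assms] assms(1) subgroup.m_inv_closed by (metis image_eqI)
next
  fix a b assume "a \<in> \<phi> ` P" "b \<in> \<phi> ` P"
  then obtain x y where "x \<in> P" "y \<in> P" "a = \<phi> x" "b = \<phi> y" by blast
  then show "a \<otimes> b \<in> \<phi> ` P" using assms(3) assms(1) subgroup.m_closed by (metis image_eqI)
qed

lemma hom_image_sub:
  assumes "subgroup P S" "subgroup R S" "\<phi> \<in> Hom P R"
  shows "subgroup (\<phi> ` P) S"
proof -
  have "\<phi> ` P \<subseteq> carrier S" using hom_props(2)[OF assms] assms(2) subgroup.subset by blast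
  then show ?thesis using hom_image_subgroup[OF assms(1)] hom_props(4)[OF assms] by blast
qed

lemma hom_restr:
  assumes P: "subgroup P S" and R: "subgroup R S" and phi: "\<phi> \<in> Hom P R"
    and P': "subgroup P' S" "P' \<subseteq> P" and R': "subgroup R' S" "\<phi> ` P' \<subseteq> R'"
  shows "restrict \<phi> P' \<in> Hom P' R'"
proof -
  have "restrict (\<phi> \<circ> restrict (\<lambda>x. x) P') P' \<in> Hom P' R"
    using hom_comp[OF P'(1) P R hom_id[OF P'(1) P P'(2)] phi] .
  moreover have "restrict (\<phi> \<circ> restrict (\<lambda>x. x) P') P' = restrict \<phi> P'"
    by (auto simp: restrict_def fun_eq_iff)
  ultimately have 1: "restrict \<phi> P' \<in> Hom P' R" by simp
  have 2: "restrict \<phi> P' \<in> Hom P' (restrict \<phi> P' ` P')"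
    using hom_factor(1)[OF P'(1) R 1] .
  have eq: "restrict \<phi> P' ` P' = \<phi> ` P'" by auto
  have sub: "subgroup (\<phi> ` P') S" using hom_image_sub[OF P'(1) R 1] eq by simp
  have "restrict (restrict (\<lambda>x. x) (\<phi> ` P') \<circ> restrict \<phi> P') P' \<in> Hom P' R'"
    using hom_comp[OF P'(1) sub R'(1) 2[unfolded eq] hom_id[OF sub R'(1) R'(2)]] .
  moreover have "restrict (restrict (\<lambda>x. x) (\<phi> ` P') \<circ> restrict \<phi> P') P' = restrict \<phi> P'"
    by (auto simp: restrict_def fun_eq_iff)
  ultimately show ?thesis by simp
qed

lemma hom_restrict_eq: "\<phi> \<in> Hom P R \<Longrightarrow> subgroup P S \<Longrightarrow> subgroup R S \<Longrightarrow> restrict \<phi> P = \<phi>"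
  using hom_props(1) by (simp add: extensional_restrict)

lemma hom_retarget:
  assumes P: "subgroup P S" and R: "subgroup R S" and phi: "\<phi> \<in> Hom P R"
    and R': "subgroup R' S" "\<phi> ` P \<subseteq> R'"
  shows "\<phi> \<in> Hom P R'"
  using hom_restr[OF P R phi P order_refl R'] hom_restrict_eq[OF phi P R] by simp

lemma hom_inv:
  assumes P: "subgroup P S" and R: "subgroup R S" and phi: "\<phi> \<in> Hom P R"
  defines "\<psi> \<equiv> restrict (inv_into P \<phi>) (\<phi> ` P)"
  shows "\<psi> \<in> Hom (\<phi> ` P) P" "\<And>x. x \<in> P \<Longrightarrow> \<psi> (\<phi> x) = x" "\<And>y. y \<in> \<phi> ` P \<Longrightarrow> \<phi> (\<psi> y) = y"
    "\<psi> ` (\<phi> ` P) = P"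
proof -
  show "\<psi> \<in> Hom (\<phi> ` P) P" unfolding \<psi>_def using hom_factor(2)[OF assms(1-3)] .
  have inj: "inj_on \<phi> P" using hom_props(3)[OF assms(1-3)] .
  show "\<And>x. x \<in> P \<Longrightarrow> \<psi> (\<phi> x) = x" unfolding \<psi>_def using inj by simp
  show "\<And>y. y \<in> \<phi> ` P \<Longrightarrow> \<phi> (\<psi> y) = y" unfolding \<psi>_def by (simp add: f_inv_into_f)
  show "\<psi> ` (\<phi> ` P) = P" unfolding \<psi>_def using inj by force
qed

lemma finite_sub: "subgroup P S \<Longrightarrow> finite P"
  using fin subgroup.subset finite_subset by blast

lemma hom_auto_image:
  assumes P: "subgroup P S" and phi: "\<phi> \<in> Hom P P"
  shows "\<phi> ` P = P"
proof -
  have s: "\<phi> ` P \<subseteq> P" and i: "inj_on \<phi> P" using hom_props[OF P P phi] by auto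
  have "card (\<phi> ` P) = card P" using i by (rule card_image)
  then show ?thesis using card_subset_eq[OF finite_sub[OF P] s] by simp
qed

lemma hom_carrier:
  assumes "subgroup P S" "subgroup R S" "\<phi> \<in> Hom P R" "x \<in> P"
  shows "\<phi> x \<in> carrier S"
proof -
  have "\<phi> x \<in> R" using hom_props(2)[OF assms(1-3)] assms(4) by (rule subsetD[OF _ imageI])
  then show ?thesis by (rule subgroup.mem_carrier[OF assms(2)])
qed

lemma hom_image_carrier:
  assumes P: "subgroup P S" and R: "subgroup R S" and phi: "\<phi> \<in> Hom P R"
  shows "\<phi> ` P \<subseteq> carrier S"
proof (rule image_subsetI)
  fix y assume "y \<in> P" then show "\<phi> y \<in> carrier S" by (rule hom_carrier[OF P R phi])
qed

lemma hom_inv_elem: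
  assumes P: "subgroup P S" and R: "subgroup R S" and phi: "\<phi> \<in> Hom P R" and g: "g \<in> P"
  shows "\<phi> (inv g) = inv (\<phi> g)"
  by (rule hom_one(2)[OF P hom_image_carrier[OF P R phi] hom_props(4)[OF P R phi] g])

lemma hom_one_elem:
  assumes P: "subgroup P S" and R: "subgroup R S" and phi: "\<phi> \<in> Hom P R"
  shows "\<phi> \<one> = \<one>"
  by (rule hom_one(1)[OF P hom_image_carrier[OF P R phi] hom_props(4)[OF P R phi]])

lemma hom_conj_compat:
  assumes P: "subgroup P S" and R: "subgroup R S" and phi: "\<phi> \<in> Hom P R" and g: "g \<in> P" and x: "x \<in> P"
  shows "\<phi> (fs_conj S g x) = fs_conj S (\<phi> g) (\<phi> x)"
proof -
  have ig: "inv g \<in> P" by (rule subgroup.m_inv_closed[OF P g])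
  have gx: "g \<otimes> x \<in> P" by (rule subgroup.m_closed[OF P g x])
  have h1: "\<phi> (g \<otimes> x \<otimes> inv g) = \<phi> (g \<otimes> x) \<otimes> \<phi> (inv g)" by (rule hom_props(4)[OF P R phi gx ig])
  have h2: "\<phi> (g \<otimes> x) = \<phi> g \<otimes> \<phi> x" by (rule hom_props(4)[OF P R phi g x])
  have h3: "\<phi> (inv g) = inv (\<phi> g)" by (rule hom_inv_elem[OF P R phi g])
  show ?thesis unfolding fs_conj_def h1 h2 h3 ..
qed

end


definition AutG :: "('a set \<Rightarrow> 'a set \<Rightarrow> ('a \<Rightarrow> 'a) set) \<Rightarrow> 'a set \<Rightarrow> ('a \<Rightarrow> 'a) monoid" where
  "AutG Hom P = \<lparr>carrier = Hom P P, monoid.mult = (\<lambda>f g. restrict (f \<circ> g) P), one = restrict (\<lambda>x. x) P\<rparr>"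

lemma AutG_simps [simp]:
  "carrier (AutG Hom P) = Hom P P"
  "f \<otimes>\<^bsub>AutG Hom P\<^esub> g = restrict (f \<circ> g) P"
  "\<one>\<^bsub>AutG Hom P\<^esub> = restrict (\<lambda>x. x) P"
  by (simp_all add: AutG_def)

context fsys
begin

lemma aut_apply_in: "subgroup P S \<Longrightarrow> f \<in> Hom P P \<Longrightarrow> x \<in> P \<Longrightarrow> f x \<in> P"
  using hom_props(2) by blast

lemma aut_group:
  assumes P: "subgroup P S"
  shows "group (AutG Hom P)"
proof (rule groupI)
  fix f g assume "f \<in> carrier (AutG Hom P)" "g \<in> carrier (AutG Hom P)"
  then show "f \<otimes>\<^bsub>AutG Hom P\<^esub> g \<in> carrier (AutG Hom P)" using hom_comp[OF P P P] by simp
next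
  show "\<one>\<^bsub>AutG Hom P\<^esub> \<in> carrier (AutG Hom P)" using hom_id[OF P P] by simp
next
  fix f g h assume f: "f \<in> carrier (AutG Hom P)" and g: "g \<in> carrier (AutG Hom P)" and h: "h \<in> carrier (AutG Hom P)"
  show "f \<otimes>\<^bsub>AutG Hom P\<^esub> g \<otimes>\<^bsub>AutG Hom P\<^esub> h = f \<otimes>\<^bsub>AutG Hom P\<^esub> (g \<otimes>\<^bsub>AutG Hom P\<^esub> h)"
  proof -
    have "restrict (restrict (f \<circ> g) P \<circ> h) P x = restrict (f \<circ> restrict (g \<circ> h) P) P x" for x
      using aut_apply_in[OF P] h by (cases "x \<in> P") auto
    then show ?thesis by (simp add: fun_eq_iff)
  qed
next
  fix f assume f: "f \<in> carrier (AutG Hom P)"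
  have ext: "f \<in> extensional P" using hom_props(1)[OF P P] f by simp
  have "restrict (restrict (\<lambda>x. x) P \<circ> f) P x = f x" for x
    using aut_apply_in[OF P] f ext by (cases "x \<in> P") (auto simp: extensional_def)
  then show "\<one>\<^bsub>AutG Hom P\<^esub> \<otimes>\<^bsub>AutG Hom P\<^esub> f = f" by (simp add: fun_eq_iff)
next
  fix f assume f: "f \<in> carrier (AutG Hom P)"
  then have f': "f \<in> Hom P P" by simp
  have im: "f ` P = P" by (rule hom_auto_image[OF P f'])
  have inv: "restrict (inv_into P f) P \<in> Hom P P" using hom_inv(1)[OF P P f'] im by simp
  have "restrict (restrict (inv_into P f) P \<circ> f) P x = restrict (\<lambda>x. x) P x" for x
    using hom_inv(2)[OF P P f'] aut_apply_in[OF P f'] im by (cases "x \<in> P") auto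
  then have "restrict (inv_into P f) P \<otimes>\<^bsub>AutG Hom P\<^esub> f = \<one>\<^bsub>AutG Hom P\<^esub>" by (simp add: fun_eq_iff)
  then show "\<exists>y\<in>carrier (AutG Hom P). y \<otimes>\<^bsub>AutG Hom P\<^esub> f = \<one>\<^bsub>AutG Hom P\<^esub>" using inv by auto
qed

lemma aut_inv_apply:
  assumes P: "subgroup P S" and f: "f \<in> Hom P P" and x: "x \<in> P"
  shows "(inv\<^bsub>AutG Hom P\<^esub> f) (f x) = x" "f ((inv\<^bsub>AutG Hom P\<^esub> f) x) = x"
proof -
  interpret A: group "AutG Hom P" by (rule aut_group[OF P])
  have fc: "f \<in> carrier (AutG Hom P)" using f by simp
  have "(inv\<^bsub>AutG Hom P\<^esub> f \<otimes>\<^bsub>AutG Hom P\<^esub> f) x = x" using A.l_inv[OF fc] x by simp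
  then show "(inv\<^bsub>AutG Hom P\<^esub> f) (f x) = x" using x by simp
  have "(f \<otimes>\<^bsub>AutG Hom P\<^esub> inv\<^bsub>AutG Hom P\<^esub> f) x = x" using A.r_inv[OF fc] x by simp
  then show "f ((inv\<^bsub>AutG Hom P\<^esub> f) x) = x" using x by simp
qed

lemma aut_inv_in: "subgroup P S \<Longrightarrow> f \<in> Hom P P \<Longrightarrow> inv\<^bsub>AutG Hom P\<^esub> f \<in> Hom P P"
  using group.inv_closed[OF aut_group, of P f] by simp

lemma aut_finite:
  assumes P: "subgroup P S"
  shows "finite (Hom P P)"
proof -
  have "Hom P P \<subseteq> P \<rightarrow>\<^sub>E P"
    using hom_props(1,2)[OF P P] by (auto simp: PiE_def Pi_def)
  moreover have "finite (P \<rightarrow>\<^sub>E P)" using finite_sub[OF P] by (simp add: finite_PiE)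
  ultimately show ?thesis by (rule finite_subset)
qed

lemma fsN_carrier: "g \<in> fs_N S P \<Longrightarrow> g \<in> carrier S"
  unfolding fs_N_def by simp

lemma AutS_sub:
  assumes P: "subgroup P S"
  shows "AutS S P \<subseteq> Hom P P"
proof
  fix f assume "f \<in> AutS S P"
  then obtain g where g: "g \<in> fs_N S P" "f = restrict (fs_conj S g) P" unfolding AutS_def by blast
  then show "f \<in> Hom P P" using hom_conj[OF P P] unfolding fs_N_def by simp
qed

lemma AutS_subgroup:
  assumes P: "subgroup P S"
  shows "subgroup (AutS S P) (AutG Hom P)"
proof -
  interpret A: group "AutG Hom P" by (rule aut_group[OF P])
  have PS: "P \<subseteq> carrier S" using P subgroup.subset by blast
  have mult: "restrict (fs_conj S g) P \<otimes>\<^bsub>AutG Hom P\<^esub> restrict (fs_conj S h) P = restrict (fs_conj S (g \<otimes> h)) P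
     \<and> g \<otimes> h \<in> fs_N S P"
    if g: "g \<in> fs_N S P" and h: "h \<in> fs_N S P" for g h
  proof
    have gc: "g \<in> carrier S" and hc: "h \<in> carrier S" using g h fsN_carrier by auto
    have himg: "fs_conj S h ` P = P" using h unfolding fs_N_def by simp
    have gimg: "fs_conj S g ` P = P" using g unfolding fs_N_def by simp
    have "restrict (restrict (fs_conj S g) P \<circ> restrict (fs_conj S h) P) P x = restrict (fs_conj S (g \<otimes> h)) P x" for x
    proof (cases "x \<in> P")
      case True
      then have "fs_conj S h x \<in> P" using himg by blast
      then show ?thesis using True conj_conj[OF gc hc] PS by auto
    qed simp
    then show "restrict (fs_conj S g) P \<otimes>\<^bsub>AutG Hom P\<^esub> restrict (fs_conj S h) P = restrict (fs_conj S (g \<otimes> h)) P"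
      by (simp add: fun_eq_iff)
    have "fs_conj S (g \<otimes> h) ` P = fs_conj S g ` (fs_conj S h ` P)"
      using conj_conj[OF gc hc] PS by (auto simp: image_def subsetD)
    then show "g \<otimes> h \<in> fs_N S P" using gimg himg gc hc unfolding fs_N_def by simp
  qed
  show ?thesis
  proof (rule A.subgroupI)
    show "AutS S P \<subseteq> carrier (AutG Hom P)" using AutS_sub[OF P] by simp
    have "\<one> \<in> fs_N S P" unfolding fs_N_def using PS conj_one by (auto simp: image_def subsetD)
    then show "AutS S P \<noteq> {}" unfolding AutS_def by blast
  next
    fix f assume "f \<in> AutS S P"
    then obtain g where g: "g \<in> fs_N S P" "f = restrict (fs_conj S g) P" unfolding AutS_def by blast
    have gc: "g \<in> carrier S" using g fsN_carrier by auto
    have gimg: "fs_conj S g ` P = P" using g unfolding fs_N_def by simp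
    have "fs_conj S (inv g) ` P = fs_conj S (inv g) ` (fs_conj S g ` P)" using gimg by simp
    also have "\<dots> = P" using conj_inv_cancel[OF gc] PS by (auto simp: image_def subsetD)
    finally have ig: "inv g \<in> fs_N S P" unfolding fs_N_def using gc by simp
    have "restrict (fs_conj S (inv g)) P \<otimes>\<^bsub>AutG Hom P\<^esub> f = restrict (fs_conj S (inv g \<otimes> g)) P"
      using mult[OF ig g(1)] g(2) by simp
    also have "\<dots> = \<one>\<^bsub>AutG Hom P\<^esub>" using gc PS conj_one by (auto simp: fun_eq_iff subsetD)
    finally have "inv\<^bsub>AutG Hom P\<^esub> f = restrict (fs_conj S (inv g)) P"
      using A.inv_equality AutS_sub[OF P] g ig unfolding AutS_def by (metis (mono_tags, lifting) AutG_simps(1) mem_Collect_eq subsetD)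
    then show "inv\<^bsub>AutG Hom P\<^esub> f \<in> AutS S P" unfolding AutS_def using ig by blast
  next
    fix f f' assume "f \<in> AutS S P" "f' \<in> AutS S P"
    then obtain g h where "g \<in> fs_N S P" "f = restrict (fs_conj S g) P" "h \<in> fs_N S P" "f' = restrict (fs_conj S h) P"
      unfolding AutS_def by blast
    then show "f \<otimes>\<^bsub>AutG Hom P\<^esub> f' \<in> AutS S P" using mult unfolding AutS_def by blast
  qed
qed

end


context fsys
begin

lemma core:
  assumes p: "prime p" and oS: "order S = p ^ n"
    and P: "subgroup P S" and syl: "sylow_in p (AutS S P) (Hom P P)"
    and P0: "subgroup P0 S" and P0P: "P0 \<subseteq> P"
    and nrm: "\<And>x. x \<in> P \<Longrightarrow> fs_conj S x ` P0 = P0"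
    and ctr: "\<And>e. e \<in> Hom P P \<Longrightarrow> fs_C S (e ` P0) \<subseteq> e ` P0"
    and psi: "\<psi> \<in> Hom P P" and triv: "\<And>y. y \<in> P0 \<Longrightarrow> \<psi> y = y"
  shows "\<exists>z\<in>P0. \<forall>x\<in>P. \<psi> x = fs_conj S z x"
proof -
  define A where "A = AutG Hom P"
  interpret A: group A unfolding A_def by (rule aut_group[OF P])
  have PS: "P \<subseteq> carrier S" using P subgroup.subset by blast
  have inP: "\<And>x. x \<in> P \<Longrightarrow> x \<in> carrier S" using PS by blast
  have idH: "restrict (\<lambda>x. x) P \<in> Hom P P" by (rule hom_id[OF P P order_refl])
  have CP0: "fs_C S P0 \<subseteq> P0"
  proof -
    have "restrict (\<lambda>x. x) P ` P0 = P0" using P0P by auto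
    then show ?thesis using ctr[OF idH] by simp
  qed
  have psiP: "\<And>x. x \<in> P \<Longrightarrow> \<psi> x \<in> P" by (rule aut_apply_in[OF P psi])
  have wP0: "inv x \<otimes> \<psi> x \<in> P0" if x: "x \<in> P" for x
  proof -
    have xc: "x \<in> carrier S" using x inP by blast
    have px: "\<psi> x \<in> carrier S" using psiP[OF x] inP by blast
    have "inv x \<otimes> \<psi> x \<in> fs_C S P0"
      unfolding fs_C_def
    proof (intro CollectI conjI ballI)
      show "inv x \<otimes> \<psi> x \<in> carrier S" using xc px by simp
      fix y assume y: "y \<in> P0"
      have yP: "y \<in> P" using y P0P by blast
      have yc: "y \<in> carrier S" using yP inP by blast
      have "fs_conj S x y \<in> P0" using nrm[OF x] y by blast
      then have "\<psi> (fs_conj S x y) = fs_conj S x y" by (rule triv)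
      moreover have "\<psi> (fs_conj S x y) = fs_conj S (\<psi> x) (\<psi> y)" by (rule hom_conj_compat[OF P P psi x yP])
      ultimately have "fs_conj S x y = fs_conj S (\<psi> x) y" using triv[OF y] by simp
      then have "fs_conj S (inv x) (fs_conj S x y) = fs_conj S (inv x) (fs_conj S (\<psi> x) y)" by simp
      then have "y = fs_conj S (inv x \<otimes> \<psi> x) y"
        using conj_inv_cancel[OF xc yc] conj_conj[OF _ px yc, of "inv x"] xc by simp
      then show "inv x \<otimes> \<psi> x \<otimes> y = y \<otimes> (inv x \<otimes> \<psi> x)"
        using conj_eq_iff_C[of "inv x \<otimes> \<psi> x" y] xc px yc by simp
    qed
    then show ?thesis using CP0 by blast
  qed
  have psi_dec: "\<psi> x = x \<otimes> (inv x \<otimes> \<psi> x)" if x: "x \<in> P" for x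
  proof -
    have xc: "x \<in> carrier S" using x inP by blast
    have px: "\<psi> x \<in> carrier S" using psiP[OF x] inP by blast
    show ?thesis using xc px by (simp add: m_assoc[symmetric])
  qed
  have psiA: "\<psi> \<in> carrier A" unfolding A_def using psi by simp
  have pw: "(\<psi> [^]\<^bsub>A\<^esub> k) \<in> Hom P P \<and> (\<forall>y\<in>P0. (\<psi> [^]\<^bsub>A\<^esub> k) y = y) \<and>
            (\<forall>x\<in>P. (\<psi> [^]\<^bsub>A\<^esub> k) x = x \<otimes> (inv x \<otimes> \<psi> x) [^] k)" for k :: nat
  proof (induction k)
    case 0
    have e0: "\<psi> [^]\<^bsub>A\<^esub> (0::nat) = restrict (\<lambda>x. x) P" unfolding A_def by simp
    have a1: "\<psi> [^]\<^bsub>A\<^esub> (0::nat) \<in> Hom P P" unfolding e0 by (rule idH)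
    have a2: "\<forall>y\<in>P0. (\<psi> [^]\<^bsub>A\<^esub> (0::nat)) y = y" unfolding e0 using P0P by auto
    have a3: "\<forall>x\<in>P. (\<psi> [^]\<^bsub>A\<^esub> (0::nat)) x = x \<otimes> (inv x \<otimes> \<psi> x) [^] (0::nat)" unfolding e0 using inP by auto
    show ?case using a1 a2 a3 by blast
  next
    case (Suc k)
    define f where "f = \<psi> [^]\<^bsub>A\<^esub> k"
    have fH: "f \<in> Hom P P" and f0: "\<forall>y\<in>P0. f y = y" and f1: "\<forall>x\<in>P. f x = x \<otimes> (inv x \<otimes> \<psi> x) [^] k"
      using Suc unfolding f_def by auto
    have eq: "\<psi> [^]\<^bsub>A\<^esub> Suc k = restrict (f \<circ> \<psi>) P" unfolding f_def A_def by simp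
    have "\<psi> [^]\<^bsub>A\<^esub> Suc k \<in> carrier A" using A.nat_pow_closed[OF psiA] .
    then have c1: "\<psi> [^]\<^bsub>A\<^esub> Suc k \<in> Hom P P" unfolding A_def by simp
    have c2: "\<forall>y\<in>P0. (\<psi> [^]\<^bsub>A\<^esub> Suc k) y = y" using eq f0 triv P0P by auto
    have c3: "(\<psi> [^]\<^bsub>A\<^esub> Suc k) x = x \<otimes> (inv x \<otimes> \<psi> x) [^] Suc k" if x: "x \<in> P" for x
    proof -
      define w where "w = inv x \<otimes> \<psi> x"
      have w0: "w \<in> P0" unfolding w_def by (rule wP0[OF x])
      have wP: "w \<in> P" using w0 P0P by blast
      have wc: "w \<in> carrier S" using wP inP by blast
      have xc: "x \<in> carrier S" using x inP by blast
      have "(\<psi> [^]\<^bsub>A\<^esub> Suc k) x = f (\<psi> x)" using eq x by simp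
      also have "\<dots> = f (x \<otimes> w)" using psi_dec[OF x] unfolding w_def by simp
      also have "\<dots> = f x \<otimes> f w" by (rule hom_props(4)[OF P P fH x wP])
      also have "\<dots> = x \<otimes> w [^] k \<otimes> w" using f1 x f0 w0 unfolding w_def by simp
      also have "\<dots> = x \<otimes> w [^] Suc k" using xc wc by (simp add: m_assoc)
      finally show ?thesis unfolding w_def .
    qed
    show ?case using c1 c2 c3 by blast
  qed
  have pw1: "\<psi> [^]\<^bsub>A\<^esub> (p ^ n) = \<one>\<^bsub>A\<^esub>"
  proof -
    define f where "f = \<psi> [^]\<^bsub>A\<^esub> (p ^ n)"
    have fH: "f \<in> Hom P P" and f1: "\<forall>x\<in>P. f x = x \<otimes> (inv x \<otimes> \<psi> x) [^] (p ^ n)"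
      using pw unfolding f_def by auto
    have "f x = restrict (\<lambda>x. x) P x" for x
    proof (cases "x \<in> P")
      case True
      have xc: "x \<in> carrier S" using True inP by blast
      have pc: "\<psi> x \<in> carrier S" using psiP[OF True] inP by blast
      have "(inv x \<otimes> \<psi> x) [^] (p ^ n) = \<one>" using pow_order_eq_1[of "inv x \<otimes> \<psi> x"] oS xc pc by simp
      then show ?thesis using f1 True xc by simp
    next
      case False
      then show ?thesis using hom_props(1)[OF P P fH] by (simp add: extensional_def)
    qed
    then show ?thesis unfolding f_def A_def by (simp add: fun_eq_iff)
  qed
  have finA: "finite (carrier A)" unfolding A_def using aut_finite[OF P] by simp
  have HA: "subgroup (AutS S P) A" unfolding A_def by (rule AutS_subgroup[OF P])
  have cH: "card (AutS S P) = p ^ multiplicity p (order A)"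
    using syl unfolding sylow_in_def A_def order_def by simp
  obtain d where d: "d \<in> carrier A" and dH: "inv\<^bsub>A\<^esub> d \<otimes>\<^bsub>A\<^esub> \<psi> \<otimes>\<^bsub>A\<^esub> d \<in> AutS S P"
    using sylow_conj_elem[OF A.is_group finA p HA cH psiA pw1] by blast
  define e where "e = inv\<^bsub>A\<^esub> d"
  have dH': "d \<in> Hom P P" using d unfolding A_def by simp
  have eH: "e \<in> Hom P P" unfolding e_def A_def by (rule aut_inv_in[OF P dH'])
  have ed: "\<And>x. x \<in> P \<Longrightarrow> e (d x) = x" unfolding e_def A_def by (rule aut_inv_apply(1)[OF P dH'])
  have de: "\<And>x. x \<in> P \<Longrightarrow> d (e x) = x" unfolding e_def A_def by (rule aut_inv_apply(2)[OF P dH'])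
  have dP: "\<And>x. x \<in> P \<Longrightarrow> d x \<in> P" by (rule aut_apply_in[OF P dH'])
  have eP: "\<And>x. x \<in> P \<Longrightarrow> e x \<in> P" by (rule aut_apply_in[OF P eH])
  obtain s where s: "s \<in> fs_N S P" and seq: "e \<otimes>\<^bsub>A\<^esub> \<psi> \<otimes>\<^bsub>A\<^esub> d = restrict (fs_conj S s) P"
    using dH unfolding AutS_def e_def by blast
  have sc: "s \<in> carrier S" using s fsN_carrier by blast
  have eq1: "e (\<psi> (d x)) = fs_conj S s x" if x: "x \<in> P" for x
  proof -
    have "(e \<otimes>\<^bsub>A\<^esub> \<psi> \<otimes>\<^bsub>A\<^esub> d) x = e (\<psi> (d x))" unfolding A_def using x dP by simp
    then show ?thesis using seq x by simp
  qed
  have "s \<in> fs_C S (e ` P0)"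
    unfolding fs_C_def
  proof (intro CollectI conjI ballI)
    show "s \<in> carrier S" by (rule sc)
    fix u assume "u \<in> e ` P0"
    then obtain y where y: "y \<in> P0" "u = e y" by blast
    have yP: "y \<in> P" using y P0P by blast
    have "fs_conj S s u = e (\<psi> (d (e y)))" using eq1[OF eP[OF yP]] y by simp
    also have "\<dots> = u" using de[OF yP] triv[OF y(1)] y by simp
    finally have "fs_conj S s u = u" .
    moreover have "u \<in> carrier S" using eP[OF yP] y inP by blast
    ultimately show "s \<otimes> u = u \<otimes> s" using conj_eq_iff_C[OF sc] by blast
  qed
  then have "s \<in> e ` P0" using ctr[OF eH] by blast
  then obtain y0 where y0: "y0 \<in> P0" "s = e y0" by blast
  have y0P: "y0 \<in> P" using y0 P0P by blast
  have sP: "s \<in> P" using y0 eP[OF y0P] by simp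
  have "\<forall>x\<in>P. \<psi> x = fs_conj S y0 x"
  proof
    fix x assume x: "x \<in> P"
    have "\<psi> x = d (e (\<psi> x))" using de[OF psiP[OF x]] by simp
    also have "e (\<psi> x) = e (\<psi> (d (e x)))" using de[OF x] by simp
    also have "\<dots> = fs_conj S s (e x)" by (rule eq1[OF eP[OF x]])
    also have "d (fs_conj S s (e x)) = fs_conj S (d s) (d (e x))" by (rule hom_conj_compat[OF P P dH' sP eP[OF x]])
    also have "\<dots> = fs_conj S y0 x" using de[OF x] y0 de[OF y0P] by simp
    finally show "\<psi> x = fs_conj S y0 x" .
  qed
  then show ?thesis using y0 by blast
qed

end


context fsys
begin

lemma conj_in_sub:
  assumes P: "subgroup P S" and z: "z \<in> P" and x: "x \<in> P"
  shows "fs_conj S z x \<in> P"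
  unfolding fs_conj_def using P z x by (simp add: subgroup.m_closed subgroup.m_inv_closed)

lemma exists_fully_normalized:
  assumes P: "subgroup P S"
  shows "\<exists>\<chi>\<in>Hom P (carrier S). \<forall>\<phi>\<in>Hom P (carrier S). card (fs_N S (\<phi> ` P)) \<le> card (fs_N S (\<chi> ` P))"
proof -
  define M where "M = (\<lambda>\<phi>. card (fs_N S (\<phi> ` P))) ` Hom P (carrier S)"
  have CS: "subgroup (carrier S) S" by (rule subgroup_self)
  have ne: "M \<noteq> {}" unfolding M_def using hom_id[OF P CS] subgroup.subset[OF P] by blast
  have "M \<subseteq> {..card (carrier S)}"
    unfolding M_def fs_N_def using fin by (auto intro!: card_mono)
  then have finM: "finite M" using finite_subset by blast
  define mx where "mx = Max M"
  have "mx \<in> M" unfolding mx_def using Max_in[OF finM ne] .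
  then obtain \<chi> where \<chi>: "\<chi> \<in> Hom P (carrier S)" "card (fs_N S (\<chi> ` P)) = mx"
    unfolding M_def by blast
  show ?thesis
  proof (intro bexI[OF _ \<chi>(1)] ballI)
    fix \<phi> assume "\<phi> \<in> Hom P (carrier S)"
    then have "card (fs_N S (\<phi> ` P)) \<in> M" unfolding M_def by blast
    then show "card (fs_N S (\<phi> ` P)) \<le> card (fs_N S (\<chi> ` P))" using \<chi>(2) Max_ge[OF finM] unfolding mx_def by simp
  qed
qed

lemma A8:
  assumes p: "prime p" and oS: "order S = p ^ n"
    and sat: "\<And>Q. subgroup Q S \<Longrightarrow> fully_normalized S Hom Q \<Longrightarrow> sylow_in p (AutS S Q) (Hom Q Q)"
    and P: "subgroup P S" and P0: "subgroup P0 S" and P0P: "P0 \<subseteq> P"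
    and nrm: "\<And>x. x \<in> P \<Longrightarrow> fs_conj S x ` P0 = P0"
    and ctr: "\<And>\<chi>. \<chi> \<in> Hom P0 (carrier S) \<Longrightarrow> fs_C S (\<chi> ` P0) \<subseteq> \<chi> ` P0"
    and psi: "\<psi> \<in> Hom P P" and triv: "\<And>y. y \<in> P0 \<Longrightarrow> \<psi> y = y"
  shows "\<exists>z\<in>P0. \<forall>x\<in>P. \<psi> x = fs_conj S z x"
proof -
  have CS: "subgroup (carrier S) S" by (rule subgroup_self)
  obtain \<chi> where \<chi>: "\<chi> \<in> Hom P (carrier S)"
    and mx: "\<And>\<phi>. \<phi> \<in> Hom P (carrier S) \<Longrightarrow> card (fs_N S (\<phi> ` P)) \<le> card (fs_N S (\<chi> ` P))"
    using exists_fully_normalized[OF P] by blast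
  define P' where "P' = \<chi> ` P"
  have P': "subgroup P' S" unfolding P'_def by (rule hom_image_sub[OF P CS \<chi>])
  have \<chi>': "\<chi> \<in> Hom P P'" unfolding P'_def by (rule hom_factor(1)[OF P CS \<chi>])
  define \<kappa> where "\<kappa> = restrict (inv_into P \<chi>) P'"
  have \<kappa>: "\<kappa> \<in> Hom P' P" unfolding \<kappa>_def P'_def by (rule hom_inv(1)[OF P CS \<chi>])
  have \<kappa>\<chi>: "\<And>x. x \<in> P \<Longrightarrow> \<kappa> (\<chi> x) = x" unfolding \<kappa>_def P'_def by (rule hom_inv(2)[OF P CS \<chi>])
  have \<chi>\<kappa>: "\<And>y. y \<in> P' \<Longrightarrow> \<chi> (\<kappa> y) = y" unfolding \<kappa>_def P'_def by (rule hom_inv(3)[OF P CS \<chi>])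
  have \<chi>P: "\<And>x. x \<in> P \<Longrightarrow> \<chi> x \<in> P'" unfolding P'_def by blast
  have \<kappa>P: "\<And>y. y \<in> P' \<Longrightarrow> \<kappa> y \<in> P" using \<kappa>\<chi> P'_def by auto
  have fn: "fully_normalized S Hom P'"
    unfolding fully_normalized_def
  proof
    fix \<phi> assume \<phi>: "\<phi> \<in> Hom P' (carrier S)"
    have c: "restrict (\<phi> \<circ> \<chi>) P \<in> Hom P (carrier S)" by (rule hom_comp[OF P P' CS \<chi>' \<phi>])
    have "restrict (\<phi> \<circ> \<chi>) P ` P = \<phi> ` P'" unfolding P'_def by auto
    then show "card (fs_N S (\<phi> ` P')) \<le> card (fs_N S P')" using mx[OF c] unfolding P'_def by simp
  qed
  have syl: "sylow_in p (AutS S P') (Hom P' P')" by (rule sat[OF P' fn])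
  define \<psi>' where "\<psi>' = restrict (\<chi> \<circ> restrict (\<psi> \<circ> \<kappa>) P') P'"
  have \<psi>'H: "\<psi>' \<in> Hom P' P'" unfolding \<psi>'_def
    using hom_comp[OF P' P P' hom_comp[OF P' P P \<kappa> psi] \<chi>'] .
  have \<psi>'v: "\<And>x. x \<in> P \<Longrightarrow> \<psi>' (\<chi> x) = \<chi> (\<psi> x)" unfolding \<psi>'_def using \<chi>P \<kappa>\<chi> by simp
  define P0' where "P0' = \<chi> ` P0"
  have r0: "restrict \<chi> P0 \<in> Hom P0 P'" by (rule hom_restr[OF P P' \<chi>' P0 P0P P']) (use P0P \<chi>P in blast)
  have P0': "subgroup P0' S"
  proof -
    have "subgroup (restrict \<chi> P0 ` P0) S" by (rule hom_image_sub[OF P0 P' r0])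
    moreover have "restrict \<chi> P0 ` P0 = P0'" unfolding P0'_def by auto
    ultimately show ?thesis by simp
  qed
  have P0'P': "P0' \<subseteq> P'" unfolding P0'_def P'_def using P0P by blast
  have nrm': "fs_conj S u ` P0' = P0'" if u: "u \<in> P'" for u
  proof -
    obtain x where x: "x \<in> P" "u = \<chi> x" using u unfolding P'_def by blast
    have "fs_conj S u ` P0' = \<chi> ` (fs_conj S x ` P0)"
      unfolding P0'_def using hom_conj_compat[OF P P' \<chi>' x(1)] P0P x(2) by (auto simp: image_iff subsetD)
    then show ?thesis using nrm[OF x(1)] unfolding P0'_def by simp
  qed
  have ctr': "fs_C S (e ` P0') \<subseteq> e ` P0'" if e: "e \<in> Hom P' P'" for e
  proof -
    have c: "restrict (e \<circ> restrict \<chi> P0) P0 \<in> Hom P0 P'" by (rule hom_comp[OF P0 P' P' r0 e])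
    have c': "restrict (e \<circ> restrict \<chi> P0) P0 \<in> Hom P0 (carrier S)"
      by (rule hom_retarget[OF P0 P' c CS]) (use c hom_image_carrier[OF P0 P' c] in blast)
    have "restrict (e \<circ> restrict \<chi> P0) P0 ` P0 = e ` P0'" unfolding P0'_def by auto
    then show ?thesis using ctr[OF c'] by simp
  qed
  have triv': "\<psi>' y = y" if y: "y \<in> P0'" for y
  proof -
    obtain x where x: "x \<in> P0" "y = \<chi> x" using y unfolding P0'_def by blast
    then show ?thesis using \<psi>'v[of x] P0P triv[OF x(1)] by auto
  qed
  obtain z' where z': "z' \<in> P0'" and zeq: "\<forall>u\<in>P'. \<psi>' u = fs_conj S z' u"
    using core[OF p oS P' syl P0' P0'P' nrm' ctr' \<psi>'H triv'] by blast
  obtain z where z: "z \<in> P0" "z' = \<chi> z" using z' unfolding P0'_def by blast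
  have zP: "z \<in> P" using z P0P by blast
  have "\<forall>x\<in>P. \<psi> x = fs_conj S z x"
  proof
    fix x assume x: "x \<in> P"
    have "\<chi> (\<psi> x) = \<psi>' (\<chi> x)" using \<psi>'v[OF x] by simp
    also have "\<dots> = fs_conj S (\<chi> z) (\<chi> x)" using zeq \<chi>P[OF x] z by simp
    also have "\<dots> = \<chi> (fs_conj S z x)" using hom_conj_compat[OF P P' \<chi>' zP x] by simp
    finally have "\<chi> (\<psi> x) = \<chi> (fs_conj S z x)" .
    moreover have "\<psi> x \<in> P" by (rule aut_apply_in[OF P psi x])
    moreover have "fs_conj S z x \<in> P" by (rule conj_in_sub[OF P zP x])
    ultimately show "\<psi> x = fs_conj S z x" using hom_props(3)[OF P P' \<chi>'] by (meson inj_onD)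
  qed
  then show ?thesis using z by blast
qed

end


context fsys
begin

lemma fsN_one: assumes X: "X \<subseteq> carrier S" shows "\<one> \<in> fs_N S X"
proof -
  have "fs_conj S \<one> ` X = X"
  proof
    show "fs_conj S \<one> ` X \<subseteq> X" using X conj_one by (auto simp: subsetD)
    show "X \<subseteq> fs_conj S \<one> ` X"
    proof
      fix x assume x: "x \<in> X"
      then have "x = fs_conj S \<one> x" using X conj_one by (auto simp: subsetD)
      then show "x \<in> fs_conj S \<one> ` X" using x by blast
    qed
  qed
  then show ?thesis unfolding fs_N_def by simp
qed

lemma conj_image_comp:
  assumes X: "X \<subseteq> carrier S" and g: "g \<in> carrier S" and h: "h \<in> carrier S"
  shows "fs_conj S (g \<otimes> h) ` X = fs_conj S g ` (fs_conj S h ` X)"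
proof -
  have "fs_conj S (g \<otimes> h) x = fs_conj S g (fs_conj S h x)" if "x \<in> X" for x
    using conj_conj[OF g h] X that by (auto simp: subsetD)
  then show ?thesis by (auto simp: image_iff)
qed

lemma fsN_mult: assumes X: "X \<subseteq> carrier S" and g: "g \<in> fs_N S X" and h: "h \<in> fs_N S X"
  shows "g \<otimes> h \<in> fs_N S X"
proof -
  have gc: "g \<in> carrier S" and hc: "h \<in> carrier S" using g h fsN_carrier by auto
  have "fs_conj S (g \<otimes> h) ` X = X" using conj_image_comp[OF X gc hc] g h unfolding fs_N_def by simp
  then show ?thesis unfolding fs_N_def using gc hc by simp
qed

lemma fsN_inv: assumes X: "X \<subseteq> carrier S" and g: "g \<in> fs_N S X"
  shows "inv g \<in> fs_N S X"
proof -
  have gc: "g \<in> carrier S" using g fsN_carrier by auto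
  have gi: "fs_conj S g ` X = X" using g unfolding fs_N_def by simp
  have "fs_conj S (inv g \<otimes> g) ` X = X" using fsN_one[OF X] gc unfolding fs_N_def by simp
  then have "fs_conj S (inv g) ` X = X" using conj_image_comp[OF X _ gc, of "inv g"] gc gi by simp
  then show ?thesis unfolding fs_N_def using gc by simp
qed

lemma normalizer_in_sub:
  assumes P: "subgroup P S" and X: "X \<subseteq> carrier S"
  shows "subgroup (P \<inter> fs_N S X) S"
proof (rule subgroupI)
  show "P \<inter> fs_N S X \<subseteq> carrier S" using P subgroup.subset by blast
  show "P \<inter> fs_N S X \<noteq> {}" using fsN_one[OF X] subgroup.one_closed[OF P] by blast
  fix a assume "a \<in> P \<inter> fs_N S X" then show "inv a \<in> P \<inter> fs_N S X"
    using fsN_inv[OF X] subgroup.m_inv_closed[OF P] by blast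
next
  fix a b assume "a \<in> P \<inter> fs_N S X" "b \<in> P \<inter> fs_N S X" then show "a \<otimes> b \<in> P \<inter> fs_N S X"
    using fsN_mult[OF X] subgroup.m_closed[OF P] by blast
qed

lemma N_phi_char:
  assumes Q: "subgroup Q S" and CS: "subgroup R S" and beta: "\<beta> \<in> Hom Q R"
  shows "g \<in> N_phi S Q \<beta> \<longleftrightarrow> g \<in> fs_N S Q \<and>
     (\<exists>h\<in>fs_N S (\<beta> ` Q). \<forall>y\<in>Q. \<beta> (fs_conj S g y) = fs_conj S h (\<beta> y))"
proof -
  have inj: "inj_on \<beta> Q" using hom_props(3)[OF Q CS beta] .
  have eqv: "restrict (\<beta> \<circ> fs_conj S g \<circ> inv_into Q \<beta>) (\<beta> ` Q) = restrict (fs_conj S h) (\<beta> ` Q)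
     \<longleftrightarrow> (\<forall>y\<in>Q. \<beta> (fs_conj S g y) = fs_conj S h (\<beta> y))" for h
  proof
    assume e: "restrict (\<beta> \<circ> fs_conj S g \<circ> inv_into Q \<beta>) (\<beta> ` Q) = restrict (fs_conj S h) (\<beta> ` Q)"
    show "\<forall>y\<in>Q. \<beta> (fs_conj S g y) = fs_conj S h (\<beta> y)"
    proof
      fix y assume y: "y \<in> Q"
      have "restrict (\<beta> \<circ> fs_conj S g \<circ> inv_into Q \<beta>) (\<beta> ` Q) (\<beta> y) = restrict (fs_conj S h) (\<beta> ` Q) (\<beta> y)"
        using e by simp
      then show "\<beta> (fs_conj S g y) = fs_conj S h (\<beta> y)" using y inj by simp
    qed
  next
    assume a: "\<forall>y\<in>Q. \<beta> (fs_conj S g y) = fs_conj S h (\<beta> y)"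
    show "restrict (\<beta> \<circ> fs_conj S g \<circ> inv_into Q \<beta>) (\<beta> ` Q) = restrict (fs_conj S h) (\<beta> ` Q)"
    proof
      fix u show "restrict (\<beta> \<circ> fs_conj S g \<circ> inv_into Q \<beta>) (\<beta> ` Q) u = restrict (fs_conj S h) (\<beta> ` Q) u"
      proof (cases "u \<in> \<beta> ` Q")
        case True
        then obtain y where y: "y \<in> Q" "u = \<beta> y" by blast
        then show ?thesis using a inj by simp
      qed simp
    qed
  qed
  show ?thesis unfolding N_phi_def AutS_def using eqv by blast
qed

lemma N_phi_subgroup:
  assumes Q: "subgroup Q S" and R: "subgroup R S" and beta: "\<beta> \<in> Hom Q R"
  shows "subgroup (N_phi S Q \<beta>) S"
proof -
  have QS: "Q \<subseteq> carrier S" using Q subgroup.subset by blast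
  have BS: "\<beta> ` Q \<subseteq> carrier S" by (rule hom_image_carrier[OF Q R beta])
  have bQ: "\<And>y. y \<in> Q \<Longrightarrow> \<beta> y \<in> carrier S" using BS by blast
  have cQ: "fs_conj S g y \<in> Q" if "g \<in> fs_N S Q" "y \<in> Q" for g y
    using that unfolding fs_N_def by blast
  note ch = N_phi_char[OF Q R beta]
  show ?thesis
  proof (rule subgroupI)
    show "N_phi S Q \<beta> \<subseteq> carrier S" unfolding N_phi_def fs_N_def by blast
    have "\<forall>y\<in>Q. \<beta> (fs_conj S \<one> y) = fs_conj S \<one> (\<beta> y)"
      using conj_one QS bQ by (auto simp: subsetD)
    then have "\<one> \<in> N_phi S Q \<beta>"
      unfolding ch using fsN_one[OF QS] fsN_one[OF BS] by blast
    then show "N_phi S Q \<beta> \<noteq> {}" by blast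
  next
    fix g assume "g \<in> N_phi S Q \<beta>"
    then obtain h where g: "g \<in> fs_N S Q" and h: "h \<in> fs_N S (\<beta> ` Q)"
      and e: "\<forall>y\<in>Q. \<beta> (fs_conj S g y) = fs_conj S h (\<beta> y)" unfolding ch by blast
    have gc: "g \<in> carrier S" and hc: "h \<in> carrier S" using g h fsN_carrier by auto
    have "\<beta> (fs_conj S (inv g) y) = fs_conj S (inv h) (\<beta> y)" if y: "y \<in> Q" for y
    proof -
      have y': "fs_conj S (inv g) y \<in> Q" using cQ[OF fsN_inv[OF QS g] y] .
      have "\<beta> (fs_conj S g (fs_conj S (inv g) y)) = fs_conj S h (\<beta> (fs_conj S (inv g) y))" using e y' by blast
      moreover have "fs_conj S g (fs_conj S (inv g) y) = y"
        using conj_inv_cancel[of "inv g" y] gc y QS by (auto simp: subsetD)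
      ultimately have "\<beta> y = fs_conj S h (\<beta> (fs_conj S (inv g) y))" by simp
      then have "fs_conj S (inv h) (\<beta> y) = fs_conj S (inv h) (fs_conj S h (\<beta> (fs_conj S (inv g) y)))" by simp
      also have "\<dots> = \<beta> (fs_conj S (inv g) y)" using conj_inv_cancel[OF hc bQ[OF y']] .
      finally show ?thesis by simp
    qed
    then show "inv g \<in> N_phi S Q \<beta>" unfolding ch using fsN_inv[OF QS g] fsN_inv[OF BS h] by blast
  next
    fix g1 g2 assume "g1 \<in> N_phi S Q \<beta>" "g2 \<in> N_phi S Q \<beta>"
    then obtain h1 h2 where g1: "g1 \<in> fs_N S Q" and h1: "h1 \<in> fs_N S (\<beta> ` Q)"
      and e1: "\<forall>y\<in>Q. \<beta> (fs_conj S g1 y) = fs_conj S h1 (\<beta> y)"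
      and g2: "g2 \<in> fs_N S Q" and h2: "h2 \<in> fs_N S (\<beta> ` Q)"
      and e2: "\<forall>y\<in>Q. \<beta> (fs_conj S g2 y) = fs_conj S h2 (\<beta> y)" unfolding ch by blast
    have c: "g1 \<in> carrier S" "g2 \<in> carrier S" "h1 \<in> carrier S" "h2 \<in> carrier S"
      using g1 g2 h1 h2 fsN_carrier by auto
    have "\<beta> (fs_conj S (g1 \<otimes> g2) y) = fs_conj S (h1 \<otimes> h2) (\<beta> y)" if y: "y \<in> Q" for y
    proof -
      have yc: "y \<in> carrier S" using y QS by blast
      have y2: "fs_conj S g2 y \<in> Q" by (rule cQ[OF g2 y])
      have "\<beta> (fs_conj S (g1 \<otimes> g2) y) = \<beta> (fs_conj S g1 (fs_conj S g2 y))" using conj_conj[OF c(1,2) yc] by simp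
      also have "\<dots> = fs_conj S h1 (\<beta> (fs_conj S g2 y))" using e1 y2 by blast
      also have "\<dots> = fs_conj S h1 (fs_conj S h2 (\<beta> y))" using e2 y by simp
      also have "\<dots> = fs_conj S (h1 \<otimes> h2) (\<beta> y)" using conj_conj[OF c(3,4) bQ[OF y]] by simp
      finally show ?thesis .
    qed
    then show "g1 \<otimes> g2 \<in> N_phi S Q \<beta>" unfolding ch using fsN_mult[OF QS g1 g2] fsN_mult[OF BS h1 h2] by blast
  qed
qed

lemma center_card_le:
  assumes R': "subgroup R' S" and R: "subgroup R S" and th: "\<theta> \<in> Hom R' R" and im: "\<theta> ` R' = R"
  shows "card (R' \<inter> fs_C S R') \<le> card (R \<inter> fs_C S R)"
proof (rule card_inj_on_le)
  show "inj_on \<theta> (R' \<inter> fs_C S R')" using hom_props(3)[OF R' R th] by (rule inj_on_subset) blast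
  show "finite (R \<inter> fs_C S R)" using finite_sub[OF R] by simp
  show "\<theta> ` (R' \<inter> fs_C S R') \<subseteq> R \<inter> fs_C S R"
  proof
    fix v assume "v \<in> \<theta> ` (R' \<inter> fs_C S R')"
    then obtain u where u: "u \<in> R'" "u \<in> fs_C S R'" "v = \<theta> u" by blast
    have vR: "v \<in> R" using u im by blast
    have "v \<in> fs_C S R"
      unfolding fs_C_def
    proof (intro CollectI conjI ballI)
      show "v \<in> carrier S" using vR subgroup.subset[OF R] by blast
      fix r assume "r \<in> R"
      then obtain r' where r': "r' \<in> R'" "r = \<theta> r'" using im by blast
      have "u \<otimes> r' = r' \<otimes> u" using u(2) r'(1) unfolding fs_C_def by blast
      then have "\<theta> (u \<otimes> r') = \<theta> (r' \<otimes> u)" by simp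
      then show "v \<otimes> r = r \<otimes> v" using hom_props(4)[OF R' R th] u(1) r' u(3) by simp
    qed
    then show "v \<in> R \<inter> fs_C S R" using vR by blast
  qed
qed

end


context fsys
begin

lemma conj_self_image:
  assumes P: "subgroup P S" and x: "x \<in> P"
  shows "fs_conj S x ` P = P"
proof -
  have xc: "x \<in> carrier S" using x P subgroup.subset by blast
  have sub: "fs_conj S x ` P \<subseteq> P" using conj_in_sub[OF P x] by blast
  have "inj_on (fs_conj S x) P" using conj_inj[OF xc] subgroup.subset[OF P] by (rule inj_on_subset)
  then have "card (fs_conj S x ` P) = card P" by (rule card_image)
  then show ?thesis using card_subset_eq[OF finite_sub[OF P] sub] by simp
qed

lemma fsC_anti: "X \<subseteq> Y \<Longrightarrow> fs_C S Y \<subseteq> fs_C S X"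
  unfolding fs_C_def by blast

end

lemma sub_structure_facts:
  assumes grp: "group S" and T: "subgroup T S"
  defines "S' \<equiv> S\<lparr>carrier := T\<rparr>"
  shows "group S'" "carrier S' = T"
    "\<And>x y. x \<otimes>\<^bsub>S'\<^esub> y = x \<otimes>\<^bsub>S\<^esub> y"
    "\<And>g. g \<in> T \<Longrightarrow> fs_conj S' g = fs_conj S g"
    "\<And>P. subgroup P S' \<longleftrightarrow> subgroup P S \<and> P \<subseteq> T"
    "\<And>X. fs_C S' X = fs_C S X \<inter> T"
    "\<And>X. fs_N S' X = {g \<in> T. fs_conj S g ` X = X}"
proof -
  interpret group S by fact
  show "group S'" unfolding S'_def using subgroup.subgroup_is_group[OF T grp] .
  show "carrier S' = T" unfolding S'_def by simp
  show "\<And>x y. x \<otimes>\<^bsub>S'\<^esub> y = x \<otimes>\<^bsub>S\<^esub> y" unfolding S'_def by simp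
  show conj: "\<And>g. g \<in> T \<Longrightarrow> fs_conj S' g = fs_conj S g"
    unfolding S'_def fs_conj_def using m_inv_consistent[OF T] by (simp add: fun_eq_iff)
  show "\<And>P. subgroup P S' \<longleftrightarrow> subgroup P S \<and> P \<subseteq> T"
    unfolding S'_def using incl_subgroup[OF T] subgroup_incl[OF _ T] subgroup.subset by fastforce
  show "\<And>X. fs_C S' X = fs_C S X \<inter> T"
    unfolding S'_def fs_C_def using T subgroup.subset by fastforce
  show "\<And>X. fs_N S' X = {g \<in> T. fs_conj S g ` X = X}"
    unfolding fs_N_def using conj by (auto simp: S'_def)
qed


lemma claim_step:
  fixes S :: "('a, 'b) monoid_scheme" and HomF HomG :: "'a set \<Rightarrow> 'a set \<Rightarrow> ('a \<Rightarrow> 'a) set"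
  assumes p: "prime p" and grp: "group S" and fin: "finite (carrier S)" and oS: "order S = p ^ n"
    and F: "fusion_system S HomF"
    and sylF: "\<And>Q. subgroup Q S \<Longrightarrow> fully_normalized S HomF Q \<Longrightarrow> sylow_in p (AutS S Q) (HomF Q Q)"
    and T: "subgroup T S" and G: "fusion_system (S\<lparr>carrier := T\<rparr>) HomG"
    and extG: "\<And>Q \<phi>. subgroup Q (S\<lparr>carrier := T\<rparr>) \<Longrightarrow> \<phi> \<in> HomG Q T \<Longrightarrow>
        fully_centralized (S\<lparr>carrier := T\<rparr>) HomG (\<phi> ` Q) \<Longrightarrow>
        \<exists>\<psi>\<in>HomG (N_phi (S\<lparr>carrier := T\<rparr>) Q \<phi>) T. \<forall>x\<in>Q. \<psi> x = \<phi> x"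
    and subH: "\<And>P R. subgroup P S \<Longrightarrow> subgroup R S \<Longrightarrow> P \<subseteq> T \<Longrightarrow> R \<subseteq> T \<Longrightarrow> HomG P R \<subseteq> HomF P R"
    and Q: "subgroup Q S"
    and ctrO: "\<And>P \<chi>. subgroup P S \<Longrightarrow> Q \<subseteq> P \<Longrightarrow> \<chi> \<in> HomF P (carrier S) \<Longrightarrow> fs_C S (\<chi> ` P) \<subseteq> \<chi> ` P"
    and P: "subgroup P S" and PT: "P \<subseteq> T" and P0: "subgroup P0 S" and P0P: "P0 \<subseteq> P" and QP0: "Q \<subseteq> P0"
    and nrm: "\<And>x. x \<in> P \<Longrightarrow> fs_conj S x ` P0 = P0"
    and IH: "HomF P0 T \<subseteq> HomG P0 T"
    and phi: "\<phi> \<in> HomF P T"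
  shows "\<phi> \<in> HomG P T"
proof -
  interpret F: fsys S HomF by (rule fsys.intro[OF grp fin F])
  define S' where "S' = S\<lparr>carrier := T\<rparr>"
  note sf = sub_structure_facts[OF grp T, folded S'_def]
  have finS': "finite (carrier S')" using sf(2) F.finite_sub[OF T] by simp
  interpret G: fsys S' HomG by (rule fsys.intro[OF sf(1) finS' G[folded S'_def]])
  have CS: "subgroup (carrier S) S" by (rule F.subgroup_self)
  have TS': "subgroup T S'" using sf(5) T by simp
  have P0T: "P0 \<subseteq> T" using P0P PT by blast
  have P0S': "subgroup P0 S'" using sf(5) P0 P0T by simp
  have PS': "subgroup P S'" using sf(5) P PT by simp
  have PSc: "P \<subseteq> carrier S" using P subgroup.subset by blast
  have TSc: "T \<subseteq> carrier S" using T subgroup.subset by blast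
  have phiT: "\<phi> ` P \<subseteq> T" using F.hom_props(2)[OF P T phi] .
  define \<beta> where "\<beta> = restrict \<phi> P0"
  have betaF: "\<beta> \<in> HomF P0 T" unfolding \<beta>_def
    by (rule F.hom_restr[OF P T phi P0 P0P T]) (use phiT P0P in blast)
  have betaG: "\<beta> \<in> HomG P0 T" using IH betaF by blast
  define R where "R = \<phi> ` P0"
  have bR: "\<beta> ` P0 = R" unfolding R_def \<beta>_def by auto
  have RS: "subgroup R S" using F.hom_image_sub[OF P0 T betaF] bR by simp
  have RT: "R \<subseteq> T" unfolding R_def using phiT P0P by blast
  have betaR: "\<beta> \<in> HomF P0 R" using F.hom_factor(1)[OF P0 T betaF] bR by simp
  have betaC: "\<beta> \<in> HomF P0 (carrier S)" by (rule F.hom_retarget[OF P0 T betaF CS]) (use bR RT TSc in blast)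
  have ctrR: "fs_C S R \<subseteq> R" using ctrO[OF P0 QP0 betaC] bR by simp
  have fc: "fully_centralized S' HomG (\<beta> ` P0)"
    unfolding fully_centralized_def bR sf(2)
  proof
    fix \<chi> assume chi: "\<chi> \<in> HomG R T"
    have chiF: "\<chi> \<in> HomF R T" using subH[OF RS T RT order_refl] chi by blast
    define R2 where "R2 = \<chi> ` R"
    have R2S: "subgroup R2 S" unfolding R2_def by (rule F.hom_image_sub[OF RS T chiF])
    have R2T: "R2 \<subseteq> T" unfolding R2_def using F.hom_props(2)[OF RS T chiF] .
    have c: "restrict (\<chi> \<circ> \<beta>) P0 \<in> HomF P0 T" by (rule F.hom_comp[OF P0 RS T betaR chiF])
    have cim: "restrict (\<chi> \<circ> \<beta>) P0 ` P0 = R2" unfolding R2_def using bR by auto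
    have c': "restrict (\<chi> \<circ> \<beta>) P0 \<in> HomF P0 (carrier S)"
      by (rule F.hom_retarget[OF P0 T c CS]) (use cim R2T TSc in blast)
    have ctr2: "fs_C S R2 \<subseteq> R2" using ctrO[OF P0 QP0 c'] cim by simp
    have e2: "fs_C S' R2 = R2 \<inter> fs_C S R2" using sf(6) ctr2 R2T by blast
    have e1: "fs_C S' R = R \<inter> fs_C S R" using sf(6) ctrR RT by blast
    define \<theta> where "\<theta> = restrict (inv_into R \<chi>) R2"
    have th: "\<theta> \<in> HomF R2 R" unfolding \<theta>_def R2_def by (rule F.hom_inv(1)[OF RS T chiF])
    have thim: "\<theta> ` R2 = R" unfolding \<theta>_def R2_def by (rule F.hom_inv(4)[OF RS T chiF])
    show "card (fs_C S' (\<chi> ` R)) \<le> card (fs_C S' R)"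
      using F.center_card_le[OF R2S RS th thim] e1 e2 unfolding R2_def by simp
  qed
  obtain \<psi> where psi: "\<psi> \<in> HomG (N_phi S' P0 \<beta>) T" and psib: "\<forall>x\<in>P0. \<psi> x = \<beta> x"
    using extG[OF P0S'[unfolded S'_def] betaG fc[unfolded S'_def]] unfolding S'_def by blast
  define Nb where "Nb = N_phi S' P0 \<beta>"
  have NbS': "subgroup Nb S'" unfolding Nb_def by (rule G.N_phi_subgroup[OF P0S' TS' betaG])
  have PNb: "P \<subseteq> Nb"
  proof
    fix g assume g: "g \<in> P"
    have gT: "g \<in> T" using g PT by blast
    have pgT: "\<phi> g \<in> T" using phiT g by blast
    have c1: "g \<in> fs_N S' P0" unfolding sf(7) using gT nrm[OF g] by simp
    have comp: "\<phi> (fs_conj S g y) = fs_conj S (\<phi> g) (\<phi> y)" if "y \<in> P0" for y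
      using F.hom_conj_compat[OF P T phi g] that P0P by blast
    have "fs_conj S (\<phi> g) ` R = \<phi> ` (fs_conj S g ` P0)" unfolding R_def using comp by (auto simp: image_iff)
    then have "fs_conj S (\<phi> g) ` (\<beta> ` P0) = \<beta> ` P0" using nrm[OF g] bR unfolding R_def by simp
    then have c2: "\<phi> g \<in> fs_N S' (\<beta> ` P0)" unfolding sf(7) using pgT by simp
    have c3: "\<forall>y\<in>P0. \<beta> (fs_conj S' g y) = fs_conj S' (\<phi> g) (\<beta> y)"
    proof
      fix y assume y: "y \<in> P0"
      have "fs_conj S g y \<in> P0" using nrm[OF g] y by blast
      then show "\<beta> (fs_conj S' g y) = fs_conj S' (\<phi> g) (\<beta> y)"
        using sf(4)[OF gT] sf(4)[OF pgT] comp[OF y] y unfolding \<beta>_def by simp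
    qed
    show "g \<in> Nb" unfolding Nb_def G.N_phi_char[OF P0S' TS' betaG] using c1 c2 c3 by blast
  qed
  have psiNb: "\<psi> \<in> HomG Nb T" using psi unfolding Nb_def .
  define \<psi>' where "\<psi>' = restrict \<psi> P"
  have psiT: "\<psi> ` Nb \<subseteq> T" using G.hom_props(2)[OF NbS' TS' psiNb] .
  have psi'G: "\<psi>' \<in> HomG P T" unfolding \<psi>'_def
    by (rule G.hom_restr[OF NbS' TS' psiNb PS' PNb TS']) (use psiT PNb in blast)
  have psi'F: "\<psi>' \<in> HomF P T" using subH[OF P T PT order_refl] psi'G by blast
  have agree: "\<And>y. y \<in> P0 \<Longrightarrow> \<psi>' y = \<phi> y" unfolding \<psi>'_def using psib P0P unfolding \<beta>_def by auto
  have phiC: "\<And>x. x \<in> P \<Longrightarrow> \<phi> x \<in> carrier S" by (rule F.hom_carrier[OF P T phi])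
  have psiC: "\<And>x. x \<in> P \<Longrightarrow> \<psi>' x \<in> carrier S" by (rule F.hom_carrier[OF P T psi'F])
  have sub_img: "\<phi> ` P \<subseteq> \<psi>' ` P"
  proof
    fix u assume "u \<in> \<phi> ` P"
    then obtain x where x: "x \<in> P" "u = \<phi> x" by blast
    define a where "a = inv\<^bsub>S\<^esub> (\<psi>' x) \<otimes>\<^bsub>S\<^esub> \<phi> x"
    have pxc: "\<psi>' x \<in> carrier S" and fxc: "\<phi> x \<in> carrier S" using psiC phiC x by auto
    have ac: "a \<in> carrier S" unfolding a_def using pxc fxc by simp
    have "a \<in> fs_C S R"
      unfolding fs_C_def
    proof (intro CollectI conjI ballI)
      show "a \<in> carrier S" by (rule ac)
      fix v assume "v \<in> R"
      then obtain y where y: "y \<in> P0" "v = \<phi> y" unfolding R_def by blast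
      have yP: "y \<in> P" using y P0P by blast
      have vc: "v \<in> carrier S" using phiC[OF yP] y by simp
      have cy: "fs_conj S x y \<in> P0" using nrm[OF x(1)] y by blast
      have "fs_conj S (\<phi> x) v = \<phi> (fs_conj S x y)" using F.hom_conj_compat[OF P T phi x(1) yP] y by simp
      also have "\<dots> = \<psi>' (fs_conj S x y)" using agree[OF cy] by simp
      also have "\<dots> = fs_conj S (\<psi>' x) (\<psi>' y)" by (rule F.hom_conj_compat[OF P T psi'F x(1) yP])
      also have "\<dots> = fs_conj S (\<psi>' x) v" using agree[OF y(1)] y by simp
      finally have "fs_conj S (\<phi> x) v = fs_conj S (\<psi>' x) v" .
      then have "fs_conj S (inv\<^bsub>S\<^esub> (\<psi>' x)) (fs_conj S (\<phi> x) v) = fs_conj S (inv\<^bsub>S\<^esub> (\<psi>' x)) (fs_conj S (\<psi>' x) v)" by simp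
      then have "fs_conj S a v = v" unfolding a_def
        using F.conj_conj[OF _ fxc vc, of "inv\<^bsub>S\<^esub> (\<psi>' x)"] F.conj_inv_cancel[OF pxc vc] pxc by simp
      then show "a \<otimes>\<^bsub>S\<^esub> v = v \<otimes>\<^bsub>S\<^esub> a" using F.conj_eq_iff_C[OF ac vc] by simp
    qed
    then have "a \<in> R" using ctrR by blast
    then obtain y0 where y0: "y0 \<in> P0" "a = \<phi> y0" unfolding R_def by blast
    have y0P: "y0 \<in> P" using y0 P0P by blast
    have "\<phi> x = \<psi>' x \<otimes>\<^bsub>S\<^esub> a" unfolding a_def using pxc fxc by (simp add: F.m_assoc[symmetric])
    also have "\<dots> = \<psi>' x \<otimes>\<^bsub>S\<^esub> \<psi>' y0" using y0 agree[OF y0(1)] by simp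
    also have "\<dots> = \<psi>' (x \<otimes>\<^bsub>S\<^esub> y0)" using F.hom_props(4)[OF P T psi'F x(1) y0P] by simp
    finally have "u = \<psi>' (x \<otimes>\<^bsub>S\<^esub> y0)" using x by simp
    moreover have "x \<otimes>\<^bsub>S\<^esub> y0 \<in> P" using subgroup.m_closed[OF P x(1) y0P] .
    ultimately show "u \<in> \<psi>' ` P" by blast
  qed
  have img_eq: "\<phi> ` P = \<psi>' ` P"
  proof -
    have "card (\<phi> ` P) = card P" using F.hom_props(3)[OF P T phi] by (rule card_image)
    moreover have "card (\<psi>' ` P) = card P" using F.hom_props(3)[OF P T psi'F] by (rule card_image)
    moreover have "finite (\<psi>' ` P)" using F.finite_sub[OF P] by simp
    ultimately show ?thesis using card_subset_eq[OF _ sub_img] by simp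
  qed
  define R' where "R' = \<psi>' ` P"
  have R'S: "subgroup R' S" unfolding R'_def by (rule F.hom_image_sub[OF P T psi'F])
  have phiR: "\<phi> \<in> HomF P R'" by (rule F.hom_retarget[OF P T phi R'S]) (use img_eq R'_def in blast)
  define \<kappa> where "\<kappa> = restrict (inv_into P \<psi>') R'"
  have ka: "\<kappa> \<in> HomF R' P" unfolding \<kappa>_def R'_def by (rule F.hom_inv(1)[OF P T psi'F])
  have kpsi: "\<And>x. x \<in> P \<Longrightarrow> \<kappa> (\<psi>' x) = x" unfolding \<kappa>_def R'_def by (rule F.hom_inv(2)[OF P T psi'F])
  have psik: "\<And>u. u \<in> R' \<Longrightarrow> \<psi>' (\<kappa> u) = u" unfolding \<kappa>_def R'_def by (rule F.hom_inv(3)[OF P T psi'F])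
  define \<gamma> where "\<gamma> = restrict (\<kappa> \<circ> \<phi>) P"
  have gam: "\<gamma> \<in> HomF P P" unfolding \<gamma>_def by (rule F.hom_comp[OF P R'S P phiR ka])
  have gtriv: "\<gamma> y = y" if y: "y \<in> P0" for y
  proof -
    have yP: "y \<in> P" using y P0P by blast
    have "\<gamma> y = \<kappa> (\<phi> y)" unfolding \<gamma>_def using yP by simp
    also have "\<dots> = \<kappa> (\<psi>' y)" using agree[OF y] by simp
    finally show ?thesis using kpsi[OF yP] by simp
  qed
  have ctrP0: "\<And>\<chi>. \<chi> \<in> HomF P0 (carrier S) \<Longrightarrow> fs_C S (\<chi> ` P0) \<subseteq> \<chi> ` P0"
    using ctrO[OF P0 QP0] .
  obtain z where z: "z \<in> P0" and gz: "\<forall>x\<in>P. \<gamma> x = fs_conj S z x"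
    using F.A8[OF p oS sylF P P0 P0P nrm ctrP0 gam gtriv] by blast
  have zP: "z \<in> P" using z P0P by blast
  have zT: "z \<in> T" using zP PT by blast
  define cz where "cz = restrict (fs_conj S' z) P"
  have czG: "cz \<in> HomG P P" unfolding cz_def
    by (rule G.hom_conj[OF PS' PS']) (use zT sf(2) sf(4)[OF zT] F.conj_in_sub[OF P zP] in auto)
  have compG: "restrict (\<psi>' \<circ> cz) P \<in> HomG P T" by (rule G.hom_comp[OF PS' PS' TS' czG psi'G])
  have "restrict (\<psi>' \<circ> cz) P = \<phi>"
  proof
    fix x show "restrict (\<psi>' \<circ> cz) P x = \<phi> x"
    proof (cases "x \<in> P")
      case True
      have "restrict (\<psi>' \<circ> cz) P x = \<psi>' (fs_conj S z x)" unfolding cz_def using True sf(4)[OF zT] by simp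
      also have "\<dots> = \<psi>' (\<gamma> x)" using gz True by simp
      also have "\<dots> = \<psi>' (\<kappa> (\<phi> x))" unfolding \<gamma>_def using True by simp
      also have "\<dots> = \<phi> x" using psik img_eq True unfolding R'_def by blast
      finally show ?thesis .
    next
      case False
      then show ?thesis using F.hom_props(1)[OF P T phi] by (simp add: extensional_def)
    qed
  qed
  then show ?thesis using compG by simp
qed


theorem lemma2p7:
  fixes S :: "('a, 'b) monoid_scheme" and p :: nat
    and HomF HomG :: "'a set \<Rightarrow> 'a set \<Rightarrow> ('a \<Rightarrow> 'a) set" and T Q :: "'a set"
  assumes "p_group p S"
    and "saturated p S HomF"
    and "subsystem S HomF T HomG"
    and "saturated p (S\<lparr>carrier := T\<rparr>) HomG"
    and "subgroup Q S" and "Q \<subseteq> T"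
    and "centric S HomF Q"
    and "HomF Q T = HomG Q T"
  shows "HomF T T = HomG T T \<and> T = carrier S"
proof -
  obtain n where p: "prime p" and grp: "group S" and fin: "finite (carrier S)" and cS: "card (carrier S) = p ^ n"
    using assms(1) unfolding p_group_def by blast
  have oS: "order S = p ^ n" using cS by (simp add: order_def)
  have F: "fusion_system S HomF" using assms(2) unfolding saturated_def by blast
  have sylF: "\<And>Q. subgroup Q S \<Longrightarrow> fully_normalized S HomF Q \<Longrightarrow> sylow_in p (AutS S Q) (HomF Q Q)"
    using assms(2) unfolding saturated_def by blast
  interpret F: fsys S HomF by (rule fsys.intro[OF grp fin F])
  have T: "subgroup T S" and G: "fusion_system (S\<lparr>carrier := T\<rparr>) HomG"
    and subH: "\<And>P R. subgroup P S \<Longrightarrow> subgroup R S \<Longrightarrow> P \<subseteq> T \<Longrightarrow> R \<subseteq> T \<Longrightarrow> HomG P R \<subseteq> HomF P R"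
    using assms(3) unfolding subsystem_def by blast+
  define S' where "S' = S\<lparr>carrier := T\<rparr>"
  note sf = sub_structure_facts[OF grp T, folded S'_def]
  have finS': "finite (carrier S')" using sf(2) F.finite_sub[OF T] by simp
  interpret G: fsys S' HomG by (rule fsys.intro[OF sf(1) finS' G[folded S'_def]])
  have sylG: "\<And>Q. subgroup Q S' \<Longrightarrow> fully_normalized S' HomG Q \<Longrightarrow> sylow_in p (AutS S' Q) (HomG Q Q)"
    using assms(4) unfolding saturated_def S'_def by blast
  have extG: "\<And>Q \<phi>. subgroup Q (S\<lparr>carrier := T\<rparr>) \<Longrightarrow> \<phi> \<in> HomG Q T \<Longrightarrow>
        fully_centralized (S\<lparr>carrier := T\<rparr>) HomG (\<phi> ` Q) \<Longrightarrow>
        \<exists>\<psi>\<in>HomG (N_phi (S\<lparr>carrier := T\<rparr>) Q \<phi>) T. \<forall>x\<in>Q. \<psi> x = \<phi> x"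
    using assms(4) unfolding saturated_def by simp
  have CS: "subgroup (carrier S) S" by (rule F.subgroup_self)
  have Q: "subgroup Q S" by (rule assms(5))
  have QT: "Q \<subseteq> T" by (rule assms(6))
  have ctrO: "fs_C S (\<chi> ` P) \<subseteq> \<chi> ` P" if P: "subgroup P S" and QP: "Q \<subseteq> P" and chi: "\<chi> \<in> HomF P (carrier S)" for P \<chi>
  proof -
    have r: "restrict \<chi> Q \<in> HomF Q (carrier S)"
      by (rule F.hom_restr[OF P CS chi Q QP CS]) (use F.hom_image_carrier[OF P CS chi] QP in blast)
    have "fs_C S (restrict \<chi> Q ` Q) = fs_Z S (restrict \<chi> Q ` Q)"
      using assms(7) r unfolding centric_def by blast
    moreover have "restrict \<chi> Q ` Q = \<chi> ` Q" by auto
    ultimately have e: "fs_C S (\<chi> ` Q) = \<chi> ` Q \<inter> fs_C S (\<chi> ` Q)" unfolding fs_Z_def by simp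
    have "fs_C S (\<chi> ` Q) \<subseteq> \<chi> ` Q" by (subst e) (rule Int_lower1)
    moreover have "fs_C S (\<chi> ` P) \<subseteq> fs_C S (\<chi> ` Q)" using QP by (intro F.fsC_anti) blast
    ultimately show ?thesis using QP by blast
  qed
  have claim: "\<forall>P. card P = k \<longrightarrow> subgroup P S \<longrightarrow> Q \<subseteq> P \<longrightarrow> P \<subseteq> T \<longrightarrow> HomF P T \<subseteq> HomG P T" for k
  proof (induction k rule: less_induct)
    case (less k)
    show ?case
    proof (intro allI impI)
      fix P assume cP: "card P = k" and P: "subgroup P S" and QP: "Q \<subseteq> P" and PT: "P \<subseteq> T"
      show "HomF P T \<subseteq> HomG P T"
      proof (cases "P = Q")
        case True then show ?thesis using assms(8) by simp
      next
        case False
        have QP': "Q \<subset> P" using QP False by blast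
        have finP: "finite P" by (rule F.finite_sub[OF P])
        define PP where "PP = {P1. subgroup P1 S \<and> Q \<subseteq> P1 \<and> P1 \<subset> P}"
        have "PP \<subseteq> Pow (carrier S)" unfolding PP_def using subgroup.subset by blast
        then have finPP: "finite PP" using fin by (rule finite_subset[OF _ finite_Pow_iff[THEN iffD2]])
        have QPP: "Q \<in> PP" unfolding PP_def using Q QP' by blast
        define m where "m = Max (card ` PP)"
        have "m \<in> card ` PP" unfolding m_def using finPP QPP by (intro Max_in) auto
        then obtain P0 where P0PP: "P0 \<in> PP" and cP0: "card P0 = m" by blast
        have maxP: "\<And>P1. P1 \<in> PP \<Longrightarrow> card P1 \<le> m" unfolding m_def using finPP by (intro Max_ge) auto
        have P0: "subgroup P0 S" and QP0: "Q \<subseteq> P0" and P0P: "P0 \<subset> P" using P0PP unfolding PP_def by auto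
        have P0c: "P0 \<subseteq> carrier S" using P0 subgroup.subset by blast
        obtain g where g: "g \<in> P - P0" and gn: "fs_conj S g ` P0 = P0"
          using normalizer_grows[OF grp fin p oS P0 P P0P] by blast
        define N0 where "N0 = P \<inter> fs_N S P0"
        have N0: "subgroup N0 S" unfolding N0_def by (rule F.normalizer_in_sub[OF P P0c])
        have P0N0: "P0 \<subseteq> N0"
        proof
          fix x assume x: "x \<in> P0"
          then have "x \<in> P" "x \<in> carrier S" using P0P P0c by auto
          then show "x \<in> N0" unfolding N0_def fs_N_def using F.conj_self_image[OF P0 x] by simp
        qed
        have gN0: "g \<in> N0" unfolding N0_def fs_N_def using g gn subgroup.subset[OF P] by auto
        have N0P: "N0 = P"
        proof (rule ccontr)
          assume ne: "N0 \<noteq> P"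
          have "N0 \<subseteq> P" unfolding N0_def by blast
          then have "N0 \<in> PP" unfolding PP_def using N0 QP0 P0N0 ne by blast
          then have "card N0 \<le> card P0" using maxP cP0 by simp
          moreover have "P0 \<subset> N0" using P0N0 gN0 g by blast
          then have "card P0 < card N0" using F.finite_sub[OF N0] by (rule psubset_card_mono[rotated])
          ultimately show False by simp
        qed
        have nrm: "\<And>x. x \<in> P \<Longrightarrow> fs_conj S x ` P0 = P0"
          using N0P unfolding N0_def fs_N_def by blast
        have "card P0 < card P" using P0P finP by (rule psubset_card_mono[rotated])
        then have IH: "HomF P0 T \<subseteq> HomG P0 T" using less cP P0 QP0 P0P PT by blast
        show ?thesis
        proof
          fix \<phi> assume phi: "\<phi> \<in> HomF P T"
          show "\<phi> \<in> HomG P T"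
            by (rule claim_step[OF p grp fin oS F sylF T G extG subH Q ctrO P PT P0 _ QP0 nrm IH phi])
              (assumption | rule psubset_imp_subset[OF P0P])+
        qed
      qed
    qed
  qed
  have TT: "HomF T T \<subseteq> HomG T T" using claim[of "card T"] T QT by blast
  have TT': "HomG T T \<subseteq> HomF T T" using subH[OF T T] by blast
  have eqT: "HomF T T = HomG T T" using TT TT' by blast
  have TS': "subgroup T S'" using sf(5) T by simp
  have Tc: "T \<subseteq> carrier S" using T subgroup.subset by blast
  have "T = carrier S"
  proof (rule ccontr)
    assume ne: "T \<noteq> carrier S"
    then have TS: "T \<subset> carrier S" using Tc by blast
    obtain g where g: "g \<in> carrier S - T" and gn: "fs_conj S g ` T = T"
      using normalizer_grows[OF grp fin p oS T CS TS] by blast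
    have gc: "g \<in> carrier S" using g by blast
    define c where "c = restrict (fs_conj S g) T"
    have cF: "c \<in> HomF T T" unfolding c_def by (rule F.hom_conj[OF T T gc]) (use gn in blast)
    have cG: "c \<in> HomG T T" using cF eqT by simp
    have fnT: "fully_normalized S' HomG T"
      unfolding fully_normalized_def sf(2)
    proof
      fix \<phi> assume "\<phi> \<in> HomG T T"
      then have "\<phi> ` T = T" by (rule G.hom_auto_image[OF TS'])
      then show "card (fs_N S' (\<phi> ` T)) \<le> card (fs_N S' T)" by simp
    qed
    have sylT: "sylow_in p (AutS S' T) (HomG T T)" by (rule sylG[OF TS' fnT])
    define A where "A = AutG HomG T"
    interpret A: group A unfolding A_def by (rule G.aut_group[OF TS'])
    have finA: "finite (carrier A)" unfolding A_def using G.aut_finite[OF TS'] by simp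
    have HA: "subgroup (AutS S' T) A" unfolding A_def by (rule G.AutS_subgroup[OF TS'])
    have cH: "card (AutS S' T) = p ^ multiplicity p (order A)"
      using sylT unfolding sylow_in_def A_def order_def by simp
    have cA: "c \<in> carrier A" unfolding A_def using cG by simp
    have cpow: "c [^]\<^bsub>A\<^esub> k = restrict (fs_conj S (g [^]\<^bsub>S\<^esub> k)) T" for k :: nat
    proof (induction k)
      case 0
      have "restrict (\<lambda>x. x) T x = restrict (fs_conj S (g [^]\<^bsub>S\<^esub> (0::nat))) T x" for x
        using Tc F.conj_one[of x] by (cases "x \<in> T") auto
      then show ?case unfolding A_def by (simp add: fun_eq_iff)
    next
      case (Suc k)
      have gk: "g [^]\<^bsub>S\<^esub> k \<in> carrier S" using gc by simp
      have "restrict (restrict (fs_conj S (g [^]\<^bsub>S\<^esub> k)) T \<circ> c) T x = restrict (fs_conj S (g [^]\<^bsub>S\<^esub> Suc k)) T x" for x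
      proof (cases "x \<in> T")
        case True
        have "fs_conj S g x \<in> T" using gn True by blast
        then show ?thesis using True F.conj_conj[OF gk gc, of x] Tc unfolding c_def by auto
      qed simp
      then have eqf: "restrict (restrict (fs_conj S (g [^]\<^bsub>S\<^esub> k)) T \<circ> c) T = restrict (fs_conj S (g [^]\<^bsub>S\<^esub> Suc k)) T"
        by (rule ext)
      have s1: "c [^]\<^bsub>A\<^esub> Suc k = c [^]\<^bsub>A\<^esub> k \<otimes>\<^bsub>A\<^esub> c" by (rule nat_pow_Suc)
      have s2: "c [^]\<^bsub>A\<^esub> k \<otimes>\<^bsub>A\<^esub> c = restrict (c [^]\<^bsub>A\<^esub> k \<circ> c) T" unfolding A_def by (rule AutG_simps(2))
      show ?case unfolding s1 s2 unfolding Suc.IH by (rule eqf)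
    qed
    have "g [^]\<^bsub>S\<^esub> (p ^ n) = \<one>\<^bsub>S\<^esub>" using F.pow_order_eq_1[OF gc] oS by simp
    then have "c [^]\<^bsub>A\<^esub> (p ^ n) = restrict (fs_conj S \<one>\<^bsub>S\<^esub>) T" using cpow by simp
    also have "\<dots> = \<one>\<^bsub>A\<^esub>"
    proof -
      have "restrict (fs_conj S \<one>\<^bsub>S\<^esub>) T x = restrict (\<lambda>x. x) T x" for x
        using Tc F.conj_one[of x] by (cases "x \<in> T") auto
      then show ?thesis unfolding A_def by (simp add: fun_eq_iff)
    qed
    finally have cpn: "c [^]\<^bsub>A\<^esub> (p ^ n) = \<one>\<^bsub>A\<^esub>" .
    obtain d where d: "d \<in> carrier A" and dH: "inv\<^bsub>A\<^esub> d \<otimes>\<^bsub>A\<^esub> c \<otimes>\<^bsub>A\<^esub> d \<in> AutS S' T"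
      using sylow_conj_elem[OF A.is_group finA p HA cH cA cpn] by blast
    define e where "e = inv\<^bsub>A\<^esub> d"
    have dH': "d \<in> HomG T T" using d unfolding A_def by simp
    have eH: "e \<in> HomG T T" unfolding e_def A_def by (rule G.aut_inv_in[OF TS' dH'])
    have de: "\<And>x. x \<in> T \<Longrightarrow> d (e x) = x" unfolding e_def A_def by (rule G.aut_inv_apply(2)[OF TS' dH'])
    have dT: "\<And>x. x \<in> T \<Longrightarrow> d x \<in> T" by (rule G.aut_apply_in[OF TS' dH'])
    have eT: "\<And>x. x \<in> T \<Longrightarrow> e x \<in> T" by (rule G.aut_apply_in[OF TS' eH])
    obtain t where t: "t \<in> fs_N S' T" and teq: "e \<otimes>\<^bsub>A\<^esub> c \<otimes>\<^bsub>A\<^esub> d = restrict (fs_conj S' t) T"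
      using dH unfolding AutS_def e_def by blast
    have tT: "t \<in> T" using t sf(7) by blast
    have eq1: "e (fs_conj S g (d x)) = fs_conj S t x" if x: "x \<in> T" for x
    proof -
      have "(e \<otimes>\<^bsub>A\<^esub> c \<otimes>\<^bsub>A\<^esub> d) x = e (c (d x))" unfolding A_def using x dT by simp
      then show ?thesis using teq x dT[OF x] sf(4)[OF tT] unfolding c_def by simp
    qed
    define t' where "t' = d t"
    have t'T: "t' \<in> T" unfolding t'_def using dT[OF tT] .
    have t'c: "t' \<in> carrier S" using t'T Tc by blast
    have geq: "fs_conj S g x = fs_conj S t' x" if x: "x \<in> T" for x
    proof -
      have gx: "fs_conj S g x \<in> T" using gn x by blast
      have "fs_conj S g x = d (e (fs_conj S g x))" using de[OF gx] by simp
      also have "e (fs_conj S g x) = e (fs_conj S g (d (e x)))" using de[OF x] by simp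
      also have "\<dots> = fs_conj S t (e x)" by (rule eq1[OF eT[OF x]])
      also have "d (fs_conj S t (e x)) = fs_conj S t' (d (e x))"
        using G.hom_conj_compat[OF TS' TS' dH' tT eT[OF x]] sf(4)[OF tT] sf(4)[OF t'T] unfolding t'_def by simp
      also have "\<dots> = fs_conj S t' x" using de[OF x] by simp
      finally show ?thesis .
    qed
    define a where "a = inv\<^bsub>S\<^esub> t' \<otimes>\<^bsub>S\<^esub> g"
    have ac: "a \<in> carrier S" unfolding a_def using t'c gc by simp
    have "a \<in> fs_C S T"
      unfolding fs_C_def
    proof (intro CollectI conjI ballI)
      show "a \<in> carrier S" by (rule ac)
      fix x assume x: "x \<in> T"
      have xc: "x \<in> carrier S" using x Tc by blast
      have "fs_conj S a x = fs_conj S (inv\<^bsub>S\<^esub> t') (fs_conj S g x)"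
        unfolding a_def using F.conj_conj[OF _ gc xc, of "inv\<^bsub>S\<^esub> t'"] t'c by simp
      also have "\<dots> = x" using geq[OF x] F.conj_inv_cancel[OF t'c xc] by simp
      finally show "a \<otimes>\<^bsub>S\<^esub> x = x \<otimes>\<^bsub>S\<^esub> a" using F.conj_eq_iff_C[OF ac xc] by simp
    qed
    moreover have "fs_C S T \<subseteq> fs_C S Q" using QT by (rule F.fsC_anti)
    moreover have "fs_C S Q \<subseteq> Q"
    proof -
      have idQ: "restrict (\<lambda>x. x) Q \<in> HomF Q (carrier S)" by (rule F.hom_id[OF Q CS subgroup.subset[OF Q]])
      have "restrict (\<lambda>x. x) Q ` Q = Q" by auto
      then show ?thesis using ctrO[OF Q order_refl idQ] by simp
    qed
    ultimately have "a \<in> T" using QT by blast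
    then have "t' \<otimes>\<^bsub>S\<^esub> a \<in> T" using t'T subgroup.m_closed[OF T] by blast
    moreover have "t' \<otimes>\<^bsub>S\<^esub> a = g" unfolding a_def using t'c gc by (simp add: F.m_assoc[symmetric])
    ultimately show False using g by simp
  qed
  then show ?thesis using eqT by blast
qed


end
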